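(* Let $R$ be a commutative ring and let $(A,d)$ be a left dg-semiprimary, left dg-Artinian differential graded $R$-algebra whose dg-radical $\mathrm{dgrad}_2(A)$ is nilpotent. Then $(A,d)$ is left dg-Noetherian and acyclic.
   Context: A differential graded (dg) $R$-algebra $(A,d)$ is a $\mathbb{Z}$-graded $R$-algebra $A$ with an $R$-linear degree-$1$ endomorphism $d$, $d^2=0$, $d(ab)=d(a)b+(-1)^{|a|}a\,d(b)$ for homogeneous $a,b$. A left dg-module $(M,\delta)$ is a graded left $A$-module with a degree-$1$ map $\delta$, $\delta^2=0$, $\delta(am)=d(a)m+(-1)^{|a|}a\,\delta(m)$; dg-submodules are graded submodules stable under $\delta$; $(S,\delta)$ is dg-simple if $S\ne0$ and its only dg-submodules are $0,S$. $(A,d)$ is left dg-Noetherian (resp. left dg-Artinian) if $A$, as left dg-module over itself, satisfies the ascending (resp. descending) chain condition on dg-submodules (left dg-ideals). Acyclic means $\ker(d)=\operatorname{im}(d)$. The dg-radical is $\mathrm{dgrad}_2(A)=\bigcap_{(S,\delta)}\operatorname{ann}(S,\delta)$, the intersection over all dg-simple left dg-modules of their left annihilators in $A$. $(A,d)$ is left dg-semiprimary if (i) $(A/\mathrm{dgrad}_2(A),\bar d)$ is semisimple in the categorical sense, i.e. every short exact sequence of left dg-modules over it splits, and (ii) every homogeneous idempotent of $A/\mathrm{dgrad}_2(A)$ is the image of a homogeneous idempotent of $A$ under the natural map. *)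

theory Defs
  imports Main
begin

text \<open>The dg R-algebra A is the whole type 'a (a ring_1); R is the type 'r
(comm_ring_1) acting through the structure map sc (central, degree 0).\<close>

definition sgnd :: "int \<Rightarrow> 'a::ring_1" where
  "sgnd n = (if even n then 1 else -1)"

definition graded_dg_algebra ::
  "('r::comm_ring_1 \<Rightarrow> 'a::ring_1) \<Rightarrow> (int \<Rightarrow> 'a set) \<Rightarrow> ('a \<Rightarrow> 'a) \<Rightarrow> bool" where
  "graded_dg_algebra sc gr d \<longleftrightarrow>
     (\<forall>r s. sc (r + s) = sc r + sc s \<and> sc (r * s) = sc r * sc s) \<and> sc 1 = 1 \<and>
     (\<forall>r a. sc r * a = a * sc r) \<and> (\<forall>r. sc r \<in> gr 0) \<and>
     (\<forall>n. 0 \<in> gr n \<and> (\<forall>x\<in>gr n. \<forall>y\<in>gr n. x + y \<in> gr n \<and> - x \<in> gr n)) \<and>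
     (\<forall>m n. \<forall>x\<in>gr m. \<forall>y\<in>gr n. x * y \<in> gr (m + n)) \<and> 1 \<in> gr 0 \<and>
     (\<forall>a. \<exists>!c. (\<forall>n. c n \<in> gr n) \<and> finite {n. c n \<noteq> 0} \<and> a = (\<Sum>n\<in>{n. c n \<noteq> 0}. c n)) \<and>
     (\<forall>a b. d (a + b) = d a + d b) \<and> (\<forall>r a. d (sc r * a) = sc r * d a) \<and>
     (\<forall>n. \<forall>x\<in>gr n. d x \<in> gr (n + 1)) \<and> (\<forall>a. d (d a) = 0) \<and>
     (\<forall>n. \<forall>a\<in>gr n. \<forall>b. d (a * b) = d a * b + sgnd n * a * d b)"

record ('a, 'm) dgmod =
  mcar :: "'m set"
  mzero :: 'm
  madd :: "'m \<Rightarrow> 'm \<Rightarrow> 'm"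
  mneg :: "'m \<Rightarrow> 'm"
  msmul :: "'a \<Rightarrow> 'm \<Rightarrow> 'm"
  mgr :: "int \<Rightarrow> 'm set"
  mdelta :: "'m \<Rightarrow> 'm"

definition msum :: "('a, 'm) dgmod \<Rightarrow> (int \<Rightarrow> 'm) \<Rightarrow> int set \<Rightarrow> 'm" where
  "msum M c S = foldr (\<lambda>n acc. madd M (c n) acc) (sorted_list_of_set S) (mzero M)"

definition dg_module :: "(int \<Rightarrow> 'a::ring_1 set) \<Rightarrow> ('a \<Rightarrow> 'a) \<Rightarrow> ('a, 'm) dgmod \<Rightarrow> bool" where
  "dg_module gr d M \<longleftrightarrow>
     mzero M \<in> mcar M \<and>
     (\<forall>x\<in>mcar M. \<forall>y\<in>mcar M. madd M x y \<in> mcar M) \<and> (\<forall>x\<in>mcar M. mneg M x \<in> mcar M) \<and>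
     (\<forall>x\<in>mcar M. \<forall>y\<in>mcar M. \<forall>z\<in>mcar M. madd M (madd M x y) z = madd M x (madd M y z)) \<and>
     (\<forall>x\<in>mcar M. \<forall>y\<in>mcar M. madd M x y = madd M y x) \<and>
     (\<forall>x\<in>mcar M. madd M (mzero M) x = x) \<and>
     (\<forall>x\<in>mcar M. madd M (mneg M x) x = mzero M) \<and>
     (\<forall>a. \<forall>x\<in>mcar M. msmul M a x \<in> mcar M) \<and>
     (\<forall>a b. \<forall>x\<in>mcar M. msmul M (a * b) x = msmul M a (msmul M b x)) \<and>
     (\<forall>x\<in>mcar M. msmul M 1 x = x) \<and>
     (\<forall>a b. \<forall>x\<in>mcar M. msmul M (a + b) x = madd M (msmul M a x) (msmul M b x)) \<and>
     (\<forall>a. \<forall>x\<in>mcar M. \<forall>y\<in>mcar M. msmul M a (madd M x y) = madd M (msmul M a x) (msmul M a y)) \<and>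
     (\<forall>n. mgr M n \<subseteq> mcar M \<and> mzero M \<in> mgr M n \<and>
          (\<forall>x\<in>mgr M n. \<forall>y\<in>mgr M n. madd M x y \<in> mgr M n \<and> mneg M x \<in> mgr M n)) \<and>
     (\<forall>p n. \<forall>a\<in>gr p. \<forall>x\<in>mgr M n. msmul M a x \<in> mgr M (p + n)) \<and>
     (\<forall>x\<in>mcar M. \<exists>!c. (\<forall>n. c n \<in> mgr M n) \<and> finite {n. c n \<noteq> mzero M} \<and>
                        x = msum M c {n. c n \<noteq> mzero M}) \<and>
     (\<forall>x\<in>mcar M. mdelta M x \<in> mcar M) \<and>
     (\<forall>x\<in>mcar M. \<forall>y\<in>mcar M. mdelta M (madd M x y) = madd M (mdelta M x) (mdelta M y)) \<and>
     (\<forall>n. \<forall>x\<in>mgr M n. mdelta M x \<in> mgr M (n + 1)) \<and>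
     (\<forall>x\<in>mcar M. mdelta M (mdelta M x) = mzero M) \<and>
     (\<forall>p. \<forall>a\<in>gr p. \<forall>x\<in>mcar M.
        mdelta M (msmul M a x) = madd M (msmul M (d a) x) (msmul M (sgnd p * a) (mdelta M x)))"

definition dg_submodule :: "(int \<Rightarrow> 'a::ring_1 set) \<Rightarrow> ('a, 'm) dgmod \<Rightarrow> 'm set \<Rightarrow> bool" where
  "dg_submodule gr M N \<longleftrightarrow>
     N \<subseteq> mcar M \<and> mzero M \<in> N \<and>
     (\<forall>x\<in>N. \<forall>y\<in>N. madd M x y \<in> N) \<and> (\<forall>x\<in>N. mneg M x \<in> N) \<and>
     (\<forall>a. \<forall>x\<in>N. msmul M a x \<in> N) \<and> (\<forall>x\<in>N. mdelta M x \<in> N) \<and>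
     (\<forall>x\<in>N. \<forall>c. ((\<forall>n. c n \<in> mgr M n) \<and> finite {n. c n \<noteq> mzero M} \<and>
                     x = msum M c {n. c n \<noteq> mzero M}) \<longrightarrow> (\<forall>n. c n \<in> N))"

definition dg_simple :: "(int \<Rightarrow> 'a::ring_1 set) \<Rightarrow> ('a \<Rightarrow> 'a) \<Rightarrow> ('a, 'm) dgmod \<Rightarrow> bool" where
  "dg_simple gr d M \<longleftrightarrow> dg_module gr d M \<and> mcar M \<noteq> {mzero M} \<and>
     (\<forall>N. dg_submodule gr M N \<longrightarrow> N = {mzero M} \<or> N = mcar M)"

definition ann :: "('a, 'm) dgmod \<Rightarrow> 'a set" where
  "ann M = {a. \<forall>x\<in>mcar M. msmul M a x = mzero M}"

text \<open>Universe of module elements used when quantifying over "all" dg-modules.\<close>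
type_synonym 'a muniv = "(nat \<Rightarrow> 'a) set"

definition dgrad :: "(int \<Rightarrow> 'a::ring_1 set) \<Rightarrow> ('a \<Rightarrow> 'a) \<Rightarrow> 'a set" where
  "dgrad gr d = \<Inter> {ann M | M :: ('a, 'a muniv) dgmod. dg_simple gr d M}"

definition regmod :: "(int \<Rightarrow> 'a::ring_1 set) \<Rightarrow> ('a \<Rightarrow> 'a) \<Rightarrow> ('a, 'a) dgmod" where
  "regmod gr d = \<lparr>mcar = UNIV, mzero = 0, madd = (+), mneg = uminus, msmul = (*),
                   mgr = gr, mdelta = d\<rparr>"

definition left_dg_ideal :: "(int \<Rightarrow> 'a::ring_1 set) \<Rightarrow> ('a \<Rightarrow> 'a) \<Rightarrow> 'a set \<Rightarrow> bool" where
  "left_dg_ideal gr d I \<longleftrightarrow> dg_submodule gr (regmod gr d) I"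

definition dg_artinian :: "(int \<Rightarrow> 'a::ring_1 set) \<Rightarrow> ('a \<Rightarrow> 'a) \<Rightarrow> bool" where
  "dg_artinian gr d \<longleftrightarrow> (\<forall>I :: nat \<Rightarrow> 'a set. (\<forall>n. left_dg_ideal gr d (I n) \<and> I (Suc n) \<subseteq> I n)
       \<longrightarrow> (\<exists>N. \<forall>n\<ge>N. I n = I N))"

definition dg_noetherian :: "(int \<Rightarrow> 'a::ring_1 set) \<Rightarrow> ('a \<Rightarrow> 'a) \<Rightarrow> bool" where
  "dg_noetherian gr d \<longleftrightarrow> (\<forall>I :: nat \<Rightarrow> 'a set. (\<forall>n. left_dg_ideal gr d (I n) \<and> I n \<subseteq> I (Suc n))
       \<longrightarrow> (\<exists>N. \<forall>n\<ge>N. I n = I N))"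

definition acyclic_dg :: "('a::ring_1 \<Rightarrow> 'a) \<Rightarrow> bool" where
  "acyclic_dg d \<longleftrightarrow> {a. d a = 0} = range d"

definition dg_hom :: "(int \<Rightarrow> 'a::ring_1 set) \<Rightarrow> ('a, 'm) dgmod \<Rightarrow> ('a, 'n) dgmod \<Rightarrow> ('m \<Rightarrow> 'n) \<Rightarrow> bool" where
  "dg_hom gr M N f \<longleftrightarrow>
     (\<forall>x\<in>mcar M. f x \<in> mcar N) \<and>
     (\<forall>x\<in>mcar M. \<forall>y\<in>mcar M. f (madd M x y) = madd N (f x) (f y)) \<and>
     (\<forall>a. \<forall>x\<in>mcar M. f (msmul M a x) = msmul N a (f x)) \<and>
     (\<forall>n. \<forall>x\<in>mgr M n. f x \<in> mgr N n) \<and>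
     (\<forall>x\<in>mcar M. f (mdelta M x) = mdelta N (f x))"

definition annihilated :: "'a set \<Rightarrow> ('a, 'm) dgmod \<Rightarrow> bool" where
  "annihilated J M \<longleftrightarrow> (\<forall>a\<in>J. \<forall>x\<in>mcar M. msmul M a x = mzero M)"

text \<open>Left dg-modules over A/J are the left dg-modules over A annihilated by J.
  (A/J, d-bar) is semisimple: every short exact sequence of such dg-modules splits.\<close>

definition dg_semisimple_quot :: "(int \<Rightarrow> 'a::ring_1 set) \<Rightarrow> ('a \<Rightarrow> 'a) \<Rightarrow> 'a set \<Rightarrow> bool" where
  "dg_semisimple_quot gr d J \<longleftrightarrow>
     (\<forall>(M1 :: ('a, 'a muniv) dgmod) (M2 :: ('a, 'a muniv) dgmod) (M3 :: ('a, 'a muniv) dgmod) f g.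
        dg_module gr d M1 \<and> dg_module gr d M2 \<and> dg_module gr d M3 \<and>
        annihilated J M1 \<and> annihilated J M2 \<and> annihilated J M3 \<and>
        dg_hom gr M1 M2 f \<and> dg_hom gr M2 M3 g \<and>
        inj_on f (mcar M1) \<and> g ` mcar M2 = mcar M3 \<and>
        f ` mcar M1 = {x\<in>mcar M2. g x = mzero M3}
        \<longrightarrow> (\<exists>s. dg_hom gr M3 M2 s \<and> (\<forall>x\<in>mcar M3. g (s x) = x)))"

text \<open>Homogeneous idempotents of A/J are classes of homogeneous a with a*a - a in J;
  they lift if they are the class of a homogeneous idempotent of A.\<close>

definition lift_idempotents :: "(int \<Rightarrow> 'a::ring_1 set) \<Rightarrow> 'a set \<Rightarrow> bool" where
  "lift_idempotents gr J \<longleftrightarrow>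
     (\<forall>n a. a \<in> gr n \<and> a * a - a \<in> J \<longrightarrow> (\<exists>m e. e \<in> gr m \<and> e * e = e \<and> e - a \<in> J))"

definition dg_semiprimary :: "(int \<Rightarrow> 'a::ring_1 set) \<Rightarrow> ('a \<Rightarrow> 'a) \<Rightarrow> bool" where
  "dg_semiprimary gr d \<longleftrightarrow>
     dg_semisimple_quot gr d (dgrad gr d) \<and> lift_idempotents gr (dgrad gr d)"

definition nilpotent_set :: "'a::ring_1 set \<Rightarrow> bool" where
  "nilpotent_set J \<longleftrightarrow> (\<exists>n. \<forall>xs. length xs = n \<and> set xs \<subseteq> J \<longrightarrow> prod_list xs = 0)"

end

theory Submission
  imports Defs "HOL-Library.Product_Plus"
begin

lemma sgnd_simps: "sgnd (n+1) = - (sgnd n :: 'a::ring_1)" "sgnd n * sgnd n = (1::'a::ring_1)"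
  "sgnd (m + n) = (sgnd m * sgnd n :: 'a::ring_1)" "sgnd 0 = (1::'a::ring_1)" "sgnd (-1) = (-1::'a::ring_1)"
  by (auto simp: sgnd_def)

lemma ex1_eq: "\<exists>!x. P x \<Longrightarrow> P a \<Longrightarrow> P b \<Longrightarrow> a = b" by blast

lemma sgnd_central: "sgnd n * (a::'a::ring_1) = a * sgnd n"
  by (auto simp: sgnd_def)

locale gda =
  fixes sc :: "'r::comm_ring_1 \<Rightarrow> 'a::ring_1" and gr :: "int \<Rightarrow> 'a set" and d :: "'a \<Rightarrow> 'a"
  assumes G: "graded_dg_algebra sc gr d"
begin

lemma G5: "\<forall>n. 0 \<in> gr n \<and> (\<forall>x\<in>gr n. \<forall>y\<in>gr n. x + y \<in> gr n \<and> - x \<in> gr n)"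
  using G unfolding graded_dg_algebra_def by (elim conjE) assumption
lemma G6: "\<forall>m n. \<forall>x\<in>gr m. \<forall>y\<in>gr n. x * y \<in> gr (m + n)"
  using G unfolding graded_dg_algebra_def by (elim conjE) assumption
lemma gr_one: "1 \<in> gr 0"
  using G unfolding graded_dg_algebra_def by (elim conjE) assumption
lemma decompA: "\<forall>a. \<exists>!c. (\<forall>n. c n \<in> gr n) \<and> finite {n. c n \<noteq> 0} \<and> a = (\<Sum>n\<in>{n. c n \<noteq> 0}. c n)"
  using G unfolding graded_dg_algebra_def by (elim conjE) assumption
lemma G9: "\<forall>a b. d (a + b) = d a + d b"
  using G unfolding graded_dg_algebra_def by (elim conjE) assumption
lemma G11: "\<forall>n. \<forall>x\<in>gr n. d x \<in> gr (n + 1)"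
  using G unfolding graded_dg_algebra_def by (elim conjE) assumption
lemma G12: "\<forall>a. d (d a) = 0"
  using G unfolding graded_dg_algebra_def by (elim conjE) assumption
lemma G13: "\<forall>n. \<forall>a\<in>gr n. \<forall>b. d (a * b) = d a * b + sgnd n * a * d b"
  using G unfolding graded_dg_algebra_def by (elim conjE) assumption

lemma gr0[simp]: "0 \<in> gr n" using G5 by blast
lemma gr_add: "x \<in> gr n \<Longrightarrow> y \<in> gr n \<Longrightarrow> x + y \<in> gr n" using G5 by blast
lemma gr_neg: "x \<in> gr n \<Longrightarrow> - x \<in> gr n" using G5 by blast
lemma gr_mult: "x \<in> gr m \<Longrightarrow> y \<in> gr n \<Longrightarrow> x * y \<in> gr (m + n)" using G6 by blast
lemma decomp: "\<exists>!c. (\<forall>n. c n \<in> gr n) \<and> finite {n. c n \<noteq> 0} \<and> a = (\<Sum>n\<in>{n. c n \<noteq> 0}. c n)"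
  using decompA by blast
lemma d_add: "d (a + b) = d a + d b" using G9 by blast
lemma d_gr: "x \<in> gr n \<Longrightarrow> d x \<in> gr (n + 1)" using G11 by blast
lemma dd[simp]: "d (d a) = 0" using G12 by blast
lemma leib: "a \<in> gr n \<Longrightarrow> d (a * b) = d a * b + sgnd n * a * d b" using G13 by blast

lemma d0[simp]: "d 0 = 0" using d_add[of 0 0] by simp
lemma d_neg: "d (- a) = - d a" using d_add[of a "-a"] by (simp add: eq_neg_iff_add_eq_0 add.commute)
lemma d_diff: "d (a - b) = d a - d b" using d_add[of a "-b"] d_neg by simp
lemma d_sum: "d (sum f S) = sum (\<lambda>x. d (f x)) S"
  by (induction S rule: infinite_finite_induct) (auto simp: d_add)
lemma d1[simp]: "d 1 = 0" using leib[OF gr_one, of 1] by (simp add: sgnd_simps)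

lemma gr_diff: "x \<in> gr n \<Longrightarrow> y \<in> gr n \<Longrightarrow> x - y \<in> gr n"
  using gr_add gr_neg by (metis diff_conv_add_uminus)
lemma gr_sum: "(\<And>i. i \<in> S \<Longrightarrow> f i \<in> gr n) \<Longrightarrow> sum f S \<in> gr n"
  by (induction S rule: infinite_finite_induct) (auto intro: gr_add)
lemma sgnd_gr: "sgnd n \<in> gr 0" using gr_one gr_neg by (auto simp: sgnd_def)
lemma sgnd_mult_gr: "x \<in> gr p \<Longrightarrow> sgnd n * x \<in> gr p" using gr_mult[OF sgnd_gr] by fastforce

definition supp :: "(int \<Rightarrow> 'a) \<Rightarrow> int set" where "supp c = {n. c n \<noteq> 0}"

definition comp :: "int \<Rightarrow> 'a \<Rightarrow> 'a" where
  "comp n a = (THE c. (\<forall>n. c n \<in> gr n) \<and> finite {n. c n \<noteq> 0} \<and> a = (\<Sum>n\<in>{n. c n \<noteq> 0}. c n)) n"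

definition csupp :: "'a \<Rightarrow> int set" where "csupp a = {n. comp n a \<noteq> 0}"

lemma comp_props: "(\<forall>n. comp n a \<in> gr n) \<and> finite (csupp a) \<and> a = (\<Sum>n\<in>csupp a. comp n a)"
proof -
  define P where "P = (\<lambda>c. (\<forall>n. c n \<in> gr n) \<and> finite {n. c n \<noteq> 0} \<and> a = (\<Sum>n\<in>{n. c n \<noteq> 0}. c n))"
  have "P (THE c. P c)" unfolding P_def by (rule theI'[OF decomp])
  moreover have "(\<lambda>n. comp n a) = (THE c. P c)"
    unfolding comp_def P_def by (rule ext) simp
  ultimately have "P (\<lambda>n. comp n a)" by simp
  then show ?thesis unfolding P_def csupp_def by blast
qed

lemma comp_gr[simp,intro]: "comp n a \<in> gr n" using comp_props by blast
lemma finite_csupp[simp,intro]: "finite (csupp a)" using comp_props by blast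

lemma comp_sum_sup: "finite F \<Longrightarrow> csupp a \<subseteq> F \<Longrightarrow> a = (\<Sum>n\<in>F. comp n a)"
proof -
  assume F: "finite F" "csupp a \<subseteq> F"
  have "(\<Sum>n\<in>F. comp n a) = (\<Sum>n\<in>csupp a. comp n a)"
    by (rule sum.mono_neutral_right[OF F(1) F(2)]) (auto simp: csupp_def)
  then show ?thesis using comp_props by simp
qed

lemma comp_unique:
  assumes c: "\<And>n. c n \<in> gr n" and F: "finite F" and z: "\<And>n. n \<notin> F \<Longrightarrow> c n = 0"
    and a: "a = (\<Sum>n\<in>F. c n)"
  shows "comp n a = c n"
proof -
  have sub: "{n. c n \<noteq> 0} \<subseteq> F" using z by blast
  have fin: "finite {n. c n \<noteq> 0}" using finite_subset[OF sub F] .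
  have "(\<Sum>n\<in>F. c n) = (\<Sum>n\<in>{n. c n \<noteq> 0}. c n)"
    by (rule sum.mono_neutral_right[OF F sub]) auto
  with a have a': "a = (\<Sum>n\<in>{n. c n \<noteq> 0}. c n)" by simp
  have P1: "(\<forall>n. c n \<in> gr n) \<and> finite {n. c n \<noteq> 0} \<and> a = (\<Sum>n\<in>{n. c n \<noteq> 0}. c n)"
    using c fin a' by blast
  have P2: "(\<forall>n. comp n a \<in> gr n) \<and> finite {n. comp n a \<noteq> 0} \<and> a = (\<Sum>n\<in>{n. comp n a \<noteq> 0}. comp n a)"
    using comp_props[of a] unfolding csupp_def by blast
  have "c = (\<lambda>n. comp n a)"
    by (rule ex1_eq[where P="\<lambda>c. (\<forall>n. c n \<in> gr n) \<and> finite {n. c n \<noteq> 0} \<and> a = (\<Sum>n\<in>{n. c n \<noteq> 0}. c n)", OF decomp[of a] P1 P2])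
  then show ?thesis by simp
qed

lemma comp_homog: "x \<in> gr m \<Longrightarrow> comp n x = (if n = m then x else 0)"
  by (rule comp_unique[where c="\<lambda>n. if n = m then x else 0" and F="{m}"]) auto

lemma comp_add: "comp n (a + b) = comp n a + comp n b"
proof (rule comp_unique[where c="\<lambda>n. comp n a + comp n b" and F="csupp a \<union> csupp b"])
  show "a + b = (\<Sum>n\<in>csupp a \<union> csupp b. comp n a + comp n b)"
    by (simp add: sum.distrib comp_sum_sup[symmetric])
  show "finite (csupp a \<union> csupp b)" by simp
qed (auto intro: gr_add simp: csupp_def)

lemma comp_0[simp]: "comp n 0 = 0" using comp_homog[of 0 0] by simp
lemma comp_neg: "comp n (- a) = - comp n a"
  using comp_add[of n a "-a"] by (metis add.right_inverse comp_0 minus_unique)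
lemma comp_diff: "comp n (a - b) = comp n a - comp n b"
  using comp_add[of n a "-b"] comp_neg by simp
lemma comp_sum: "comp n (sum f S) = (\<Sum>i\<in>S. comp n (f i))"
  by (induction S rule: infinite_finite_induct) (auto simp: comp_add)

lemma comp_ext: "(\<And>n. comp n a = comp n b) \<Longrightarrow> a = b"
  using comp_props[of a] comp_props[of b] unfolding csupp_def by simp

lemma comp_zero_iff: "(\<forall>n. comp n a = 0) \<longleftrightarrow> a = 0"
  using comp_ext[of a 0] by auto

lemma comp_mult_left:
  assumes x: "x \<in> gr p" shows "comp r (x * b) = x * comp (r - p) b"
proof (rule comp_unique[where c="\<lambda>r'. x * comp (r' - p) b" and F="(\<lambda>q. q + p) ` csupp b"])
  show "x * comp (r' - p) b \<in> gr r'" for r'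
    using gr_mult[OF x comp_gr[of "r' - p" b]] by simp
  show "r' \<notin> (\<lambda>q. q + p) ` csupp b \<Longrightarrow> x * comp (r' - p) b = 0" for r'
    by (auto simp: csupp_def image_iff) (drule spec[of _ "r' - p"], simp)
  have "x * b = x * (\<Sum>q\<in>csupp b. comp q b)" using comp_props by metis
  also have "\<dots> = (\<Sum>q\<in>csupp b. x * comp q b)" by (simp add: sum_distrib_left)
  also have "\<dots> = (\<Sum>r'\<in>(\<lambda>q. q + p) ` csupp b. x * comp (r' - p) b)"
    by (subst sum.reindex) (auto simp: inj_on_def)
  finally show "x * b = (\<Sum>r'\<in>(\<lambda>q. q + p) ` csupp b. x * comp (r' - p) b)" .
qed simp

lemma comp_d: "comp r (d b) = d (comp (r - 1) b)"
proof (rule comp_unique[where c="\<lambda>r'. d (comp (r' - 1) b)" and F="(\<lambda>q. q + 1) ` csupp b"])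
  show "d (comp (r' - 1) b) \<in> gr r'" for r'
    using d_gr[OF comp_gr[of "r' - 1" b]] by simp
  show "r' \<notin> (\<lambda>q. q + 1) ` csupp b \<Longrightarrow> d (comp (r' - 1) b) = 0" for r'
    by (auto simp: csupp_def image_iff) (drule spec[of _ "r' - 1"], simp)
  have "d b = d (\<Sum>q\<in>csupp b. comp q b)" using comp_props by metis
  also have "\<dots> = (\<Sum>q\<in>csupp b. d (comp q b))" by (simp add: d_sum)
  also have "\<dots> = (\<Sum>r'\<in>(\<lambda>q. q + 1) ` csupp b. d (comp (r' - 1) b))"
    by (subst sum.reindex) (auto simp: inj_on_def)
  finally show "d b = (\<Sum>r'\<in>(\<lambda>q. q + 1) ` csupp b. d (comp (r' - 1) b))" .
qed simp

definition alpha :: "'a \<Rightarrow> 'a" where "alpha y = (\<Sum>q\<in>csupp y. sgnd q * comp q y)"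

lemma comp_alpha: "comp r (alpha y) = sgnd r * comp r y"
  unfolding alpha_def
proof (rule comp_unique[where c="\<lambda>q. sgnd q * comp q y" and F="csupp y"])
  show "finite (csupp y)" by simp
  show "n \<notin> csupp y \<Longrightarrow> sgnd n * comp n y = 0" for n by (simp add: csupp_def)
qed (auto intro: sgnd_mult_gr)

lemma alpha_add: "alpha (a + b) = alpha a + alpha b"
  by (rule comp_ext) (simp add: comp_alpha comp_add distrib_left)

lemma alpha_homog: "y \<in> gr n \<Longrightarrow> alpha y = sgnd n * y"
  by (rule comp_ext) (simp add: comp_alpha comp_homog comp_mult_left[OF sgnd_gr])

lemma alpha_gr: "y \<in> gr n \<Longrightarrow> alpha y \<in> gr n"
  using alpha_homog sgnd_mult_gr by simp

lemma sgnd_diff: "sgnd (r - p) = (sgnd r * sgnd p :: 'a)"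
  by (auto simp: sgnd_def)

lemma alpha_mult: assumes a: "a \<in> gr p" shows "alpha (a * y) = sgnd p * a * alpha y"
proof (rule comp_ext)
  fix r
  have "comp r (alpha (a * y)) = sgnd r * (a * comp (r - p) y)"
    by (simp add: comp_alpha comp_mult_left[OF a])
  also have "\<dots> = sgnd p * a * (sgnd (r - p) * comp (r - p) y)"
    unfolding sgnd_def by (auto simp: even_diff)
  also have "\<dots> = comp r (sgnd p * a * alpha y)"
    by (simp add: comp_mult_left[OF sgnd_mult_gr[OF a]] comp_alpha)
  finally show "comp r (alpha (a * y)) = comp r (sgnd p * a * alpha y)" .
qed

lemma d_sgnd: "d (sgnd n) = 0" by (simp add: sgnd_def d_neg)

lemma d_sgnd_mult: "d (sgnd n * x) = sgnd n * d x"
  using leib[OF sgnd_gr, of n x] by (simp add: d_sgnd sgnd_simps)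

lemma alpha_d: "d (alpha y) + alpha (d y) = 0"
proof (rule comp_ext)
  fix r
  have "comp r (d (alpha y) + alpha (d y)) = sgnd (r - 1) * d (comp (r - 1) y) + sgnd r * d (comp (r - 1) y)"
    by (simp add: comp_alpha comp_add comp_d d_sgnd_mult)
  also have "\<dots> = 0" unfolding sgnd_def by (auto simp: even_diff)
  finally show "comp r (d (alpha y) + alpha (d y)) = comp r 0" by simp
qed

end

lemma foldr_insort_lc:
  assumes lc: "\<And>x y z. x \<in> A \<Longrightarrow> y \<in> A \<Longrightarrow> z \<in> B \<Longrightarrow> F x (F y z) = F y (F x z)"
    and cl: "\<And>x z. x \<in> A \<Longrightarrow> z \<in> B \<Longrightarrow> F x z \<in> B"
    and "set xs \<subseteq> A" "a \<in> A" "z \<in> B"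
  shows "foldr F (insort a xs) z = F a (foldr F xs z)"
  using assms(3-)
proof (induction xs)
  case (Cons b xs)
  have fB: "foldr F xs z \<in> B" using Cons.prems
    by (induction xs) (auto intro: cl)
  show ?case using Cons fB lc by auto
qed simp

locale dgm = gda sc gr d for sc :: "'r::comm_ring_1 \<Rightarrow> 'a::ring_1" and gr d +
  fixes M :: "('a, 'm) dgmod"
  assumes MM: "dg_module gr d M"
begin

abbreviation "car \<equiv> mcar M"
abbreviation "z \<equiv> mzero M"
abbreviation "ad \<equiv> madd M"
abbreviation "ng \<equiv> mneg M"
abbreviation "sm \<equiv> msmul M"
abbreviation "mg \<equiv> mgr M"
abbreviation "dl \<equiv> mdelta M"

lemmas M_all = MM[unfolded dg_module_def]
lemmas Mx0 = M_all[THEN conjunct1]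
lemmas Mx1 = M_all[THEN conjunct2, THEN conjunct1]
lemmas Mx2 = M_all[THEN conjunct2, THEN conjunct2, THEN conjunct1]
lemmas Mx3 = M_all[THEN conjunct2, THEN conjunct2, THEN conjunct2, THEN conjunct1]
lemmas Mx4 = M_all[THEN conjunct2, THEN conjunct2, THEN conjunct2, THEN conjunct2, THEN conjunct1]
lemmas Mx5 = M_all[THEN conjunct2, THEN conjunct2, THEN conjunct2, THEN conjunct2, THEN conjunct2, THEN conjunct1]
lemmas Mx6 = M_all[THEN conjunct2, THEN conjunct2, THEN conjunct2, THEN conjunct2, THEN conjunct2, THEN conjunct2, THEN conjunct1]
lemmas Mx7 = M_all[THEN conjunct2, THEN conjunct2, THEN conjunct2, THEN conjunct2, THEN conjunct2, THEN conjunct2, THEN conjunct2, THEN conjunct1]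
lemmas Mx8 = M_all[THEN conjunct2, THEN conjunct2, THEN conjunct2, THEN conjunct2, THEN conjunct2, THEN conjunct2, THEN conjunct2, THEN conjunct2, THEN conjunct1]
lemmas Mx9 = M_all[THEN conjunct2, THEN conjunct2, THEN conjunct2, THEN conjunct2, THEN conjunct2, THEN conjunct2, THEN conjunct2, THEN conjunct2, THEN conjunct2, THEN conjunct1]
lemmas Mx10 = M_all[THEN conjunct2, THEN conjunct2, THEN conjunct2, THEN conjunct2, THEN conjunct2, THEN conjunct2, THEN conjunct2, THEN conjunct2, THEN conjunct2, THEN conjunct2, THEN conjunct1]
lemmas Mx11 = M_all[THEN conjunct2, THEN conjunct2, THEN conjunct2, THEN conjunct2, THEN conjunct2, THEN conjunct2, THEN conjunct2, THEN conjunct2, THEN conjunct2, THEN conjunct2, THEN conjunct2, THEN conjunct1]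
lemmas Mx12 = M_all[THEN conjunct2, THEN conjunct2, THEN conjunct2, THEN conjunct2, THEN conjunct2, THEN conjunct2, THEN conjunct2, THEN conjunct2, THEN conjunct2, THEN conjunct2, THEN conjunct2, THEN conjunct2, THEN conjunct1]
lemmas Mx13 = M_all[THEN conjunct2, THEN conjunct2, THEN conjunct2, THEN conjunct2, THEN conjunct2, THEN conjunct2, THEN conjunct2, THEN conjunct2, THEN conjunct2, THEN conjunct2, THEN conjunct2, THEN conjunct2, THEN conjunct2, THEN conjunct1]
lemmas Mx14 = M_all[THEN conjunct2, THEN conjunct2, THEN conjunct2, THEN conjunct2, THEN conjunct2, THEN conjunct2, THEN conjunct2, THEN conjunct2, THEN conjunct2, THEN conjunct2, THEN conjunct2, THEN conjunct2, THEN conjunct2, THEN conjunct2, THEN conjunct1]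
lemmas Mx15 = M_all[THEN conjunct2, THEN conjunct2, THEN conjunct2, THEN conjunct2, THEN conjunct2, THEN conjunct2, THEN conjunct2, THEN conjunct2, THEN conjunct2, THEN conjunct2, THEN conjunct2, THEN conjunct2, THEN conjunct2, THEN conjunct2, THEN conjunct2, THEN conjunct1]
lemmas Mx16 = M_all[THEN conjunct2, THEN conjunct2, THEN conjunct2, THEN conjunct2, THEN conjunct2, THEN conjunct2, THEN conjunct2, THEN conjunct2, THEN conjunct2, THEN conjunct2, THEN conjunct2, THEN conjunct2, THEN conjunct2, THEN conjunct2, THEN conjunct2, THEN conjunct2, THEN conjunct1]
lemmas Mx17 = M_all[THEN conjunct2, THEN conjunct2, THEN conjunct2, THEN conjunct2, THEN conjunct2, THEN conjunct2, THEN conjunct2, THEN conjunct2, THEN conjunct2, THEN conjunct2, THEN conjunct2, THEN conjunct2, THEN conjunct2, THEN conjunct2, THEN conjunct2, THEN conjunct2, THEN conjunct2, THEN conjunct1]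
lemmas Mx18 = M_all[THEN conjunct2, THEN conjunct2, THEN conjunct2, THEN conjunct2, THEN conjunct2, THEN conjunct2, THEN conjunct2, THEN conjunct2, THEN conjunct2, THEN conjunct2, THEN conjunct2, THEN conjunct2, THEN conjunct2, THEN conjunct2, THEN conjunct2, THEN conjunct2, THEN conjunct2, THEN conjunct2, THEN conjunct1]
lemmas Mx19 = M_all[THEN conjunct2, THEN conjunct2, THEN conjunct2, THEN conjunct2, THEN conjunct2, THEN conjunct2, THEN conjunct2, THEN conjunct2, THEN conjunct2, THEN conjunct2, THEN conjunct2, THEN conjunct2, THEN conjunct2, THEN conjunct2, THEN conjunct2, THEN conjunct2, THEN conjunct2, THEN conjunct2, THEN conjunct2]

lemma z_car[simp]: "z \<in> car" using Mx0 by blast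
lemma ad_car[simp]: "x \<in> car \<Longrightarrow> y \<in> car \<Longrightarrow> ad x y \<in> car" using Mx1 by blast
lemma ng_car[simp]: "x \<in> car \<Longrightarrow> ng x \<in> car" using Mx2 by blast
lemma ad_assoc: "x \<in> car \<Longrightarrow> y \<in> car \<Longrightarrow> w \<in> car \<Longrightarrow> ad (ad x y) w = ad x (ad y w)"
  using Mx3 by blast
lemma ad_comm: "x \<in> car \<Longrightarrow> y \<in> car \<Longrightarrow> ad x y = ad y x" using Mx4 by blast
lemma ad_z[simp]: "x \<in> car \<Longrightarrow> ad z x = x" using Mx5 by blast
lemma ad_z2[simp]: "x \<in> car \<Longrightarrow> ad x z = x" using ad_comm ad_z z_car by metis
lemma ad_ng: "x \<in> car \<Longrightarrow> ad (ng x) x = z" using Mx6 by blast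
lemma sm_car[simp]: "x \<in> car \<Longrightarrow> sm a x \<in> car" using Mx7 by blast
lemma sm_mult: "x \<in> car \<Longrightarrow> sm (a * b) x = sm a (sm b x)" using Mx8 by blast
lemma sm_one[simp]: "x \<in> car \<Longrightarrow> sm 1 x = x" using Mx9 by blast
lemma sm_dist1: "x \<in> car \<Longrightarrow> sm (a + b) x = ad (sm a x) (sm b x)" using Mx10 by blast
lemma sm_dist2: "x \<in> car \<Longrightarrow> y \<in> car \<Longrightarrow> sm a (ad x y) = ad (sm a x) (sm a y)" using Mx11 by blast
lemma mg_car: "x \<in> mg n \<Longrightarrow> x \<in> car" using Mx12 by blast
lemma z_mg[simp]: "z \<in> mg n" using Mx12 by blast
lemma sm_mg: "a \<in> gr p \<Longrightarrow> x \<in> mg n \<Longrightarrow> sm a x \<in> mg (p + n)" using Mx13 by blast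
lemma M_decomp: "x \<in> car \<Longrightarrow> \<exists>!c. (\<forall>n. c n \<in> mg n) \<and> finite {n. c n \<noteq> z} \<and> x = msum M c {n. c n \<noteq> z}"
  using Mx14 by blast
lemma dl_car[simp]: "x \<in> car \<Longrightarrow> dl x \<in> car" using Mx15 by blast
lemma dl_add: "x \<in> car \<Longrightarrow> y \<in> car \<Longrightarrow> dl (ad x y) = ad (dl x) (dl y)" using Mx16 by blast
lemma dl_leib: "a \<in> gr p \<Longrightarrow> x \<in> car \<Longrightarrow> dl (sm a x) = ad (sm (d a) x) (sm (sgnd p * a) (dl x))"
  using Mx19 by blast

lemma ad_cancel: assumes "x \<in> car" "y \<in> car" "w \<in> car" "ad x y = ad x w" shows "y = w"
proof -
  have "y = ad (ad (ng x) x) y" using assms by (simp add: ad_ng)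
  also have "\<dots> = ad (ng x) (ad x y)" using assms by (simp add: ad_assoc)
  also have "\<dots> = ad (ng x) (ad x w)" using assms by simp
  also have "\<dots> = ad (ad (ng x) x) w" using assms by (simp add: ad_assoc)
  also have "\<dots> = w" using assms by (simp add: ad_ng)
  finally show ?thesis .
qed

lemma z_unique: "x \<in> car \<Longrightarrow> y \<in> car \<Longrightarrow> ad x y = x \<Longrightarrow> y = z"
  using ad_cancel[of x y z] by simp

lemma sm_z[simp]: "sm a z = z"
  using z_unique[of "sm a z" "sm a z"] sm_dist2[of z z a] by simp

lemma sm_0[simp]: "x \<in> car \<Longrightarrow> sm 0 x = z"
  using z_unique[of "sm 0 x" "sm 0 x"] sm_dist1[of x 0 0] by simp

lemma dl_z[simp]: "dl z = z"
  using z_unique[of "dl z" "dl z"] dl_add[of z z] by simp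

lemma msum_empty[simp]: "msum M c {} = z" by (simp add: msum_def)

lemma foldr_car: "\<forall>n\<in>set xs. c n \<in> car \<Longrightarrow> foldr (\<lambda>n acc. ad (c n) acc) xs z \<in> car"
  by (induction xs) auto

lemma msum_car: "(\<And>n. n \<in> S \<Longrightarrow> c n \<in> car) \<Longrightarrow> msum M c S \<in> car"
proof -
  assume "\<And>n. n \<in> S \<Longrightarrow> c n \<in> car"
  then have "\<forall>n\<in>set (sorted_list_of_set S). c n \<in> car"
    by (cases "finite S") auto
  then show ?thesis unfolding msum_def by (rule foldr_car)
qed

lemma msum_insert:
  assumes S: "finite S" "a \<notin> S" and c: "\<And>n. n \<in> insert a S \<Longrightarrow> c n \<in> car"
  shows "msum M c (insert a S) = ad (c a) (msum M c S)"
proof -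
  have "msum M c (insert a S) = foldr (\<lambda>n acc. ad (c n) acc) (insort a (sorted_list_of_set S)) z"
    unfolding msum_def using S by (simp add: sorted_list_of_set_insert)
  also have "\<dots> = ad (c a) (foldr (\<lambda>n acc. ad (c n) acc) (sorted_list_of_set S) z)"
  proof (rule foldr_insort_lc[where A="insert a S" and B=car])
    show "ad (c x) (ad (c y) w) = ad (c y) (ad (c x) w)" if "x \<in> insert a S" "y \<in> insert a S" "w \<in> car" for x y w
      using that c by (metis ad_assoc ad_comm)
  qed (use S c in auto)
  finally show ?thesis unfolding msum_def .
qed

lemma foldr_cong: "\<forall>n\<in>set xs. c n = c' n \<Longrightarrow> foldr (\<lambda>n acc. ad (c n) acc) xs z = foldr (\<lambda>n acc. ad (c' n) acc) xs z"
  by (induction xs) auto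

lemma msum_cong: "(\<And>n. n \<in> S \<Longrightarrow> c n = c' n) \<Longrightarrow> msum M c S = msum M c' S"
proof -
  assume "\<And>n. n \<in> S \<Longrightarrow> c n = c' n"
  then have "\<forall>n\<in>set (sorted_list_of_set S). c n = c' n" by (cases "finite S") auto
  then show ?thesis unfolding msum_def by (rule foldr_cong)
qed

lemma foldr_zs: "foldr (\<lambda>n acc. ad z acc) xs z = z"
  by (induction xs) auto

lemma msum_drop:
  assumes "finite S" "\<And>n. n \<in> S \<Longrightarrow> c n \<in> car"
  shows "msum M c S = msum M c {n\<in>S. c n \<noteq> z}"
  using assms
proof (induction S rule: finite_induct)
  case (insert a S)
  have e: "{n\<in>insert a S. c n \<noteq> z} = (if c a = z then {n\<in>S. c n \<noteq> z} else insert a {n\<in>S. c n \<noteq> z})"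
    by auto
  have cS: "\<And>n. n \<in> S \<Longrightarrow> c n \<in> car" using insert by auto
  have fin: "finite {n\<in>S. c n \<noteq> z}" using insert by auto
  have IH: "msum M c S = msum M c {n\<in>S. c n \<noteq> z}" using insert cS by blast
  have ins: "msum M c (insert a S) = ad (c a) (msum M c S)"
    using insert by (intro msum_insert) auto
  show ?case
  proof (cases "c a = z")
    case True
    have "msum M c {n\<in>S. c n \<noteq> z} \<in> car" by (rule msum_car) (use cS in auto)
    then show ?thesis using ins IH e True by simp
  next
    case False
    have "msum M c (insert a {n\<in>S. c n \<noteq> z}) = ad (c a) (msum M c {n\<in>S. c n \<noteq> z})"
      using insert fin by (intro msum_insert) auto
    then show ?thesis using ins IH e False by simp
  qed
qed simp

lemma msum_reindex:
  assumes "finite S" "inj_on h S" "\<And>n. n \<in> h ` S \<Longrightarrow> c n \<in> car"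
  shows "msum M c (h ` S) = msum M (\<lambda>n. c (h n)) S"
  using assms
proof (induction S rule: finite_induct)
  case (insert a S)
  have ha: "h a \<notin> h ` S" using insert by auto
  have "msum M c (insert (h a) (h ` S)) = ad (c (h a)) (msum M c (h ` S))"
    using insert ha by (intro msum_insert) auto
  moreover have "msum M (\<lambda>n. c (h n)) (insert a S) = ad (c (h a)) (msum M (\<lambda>n. c (h n)) S)"
    using insert by (intro msum_insert) auto
  ultimately show ?case using insert by simp
qed simp

lemma sm_msum:
  assumes "finite S" "\<And>n. n \<in> S \<Longrightarrow> c n \<in> car"
  shows "sm a (msum M c S) = msum M (\<lambda>n. sm a (c n)) S"
  using assms
proof (induction S rule: finite_induct)
  case (insert x S)
  have "msum M c (insert x S) = ad (c x) (msum M c S)"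
    using insert by (intro msum_insert) auto
  moreover have "msum M (\<lambda>n. sm a (c n)) (insert x S) = ad (sm a (c x)) (msum M (\<lambda>n. sm a (c n)) S)"
    using insert by (intro msum_insert) auto
  ultimately show ?case using insert by (simp add: sm_dist2 msum_car)
qed simp

lemma msum_sm_left:
  assumes "finite S" "x \<in> car"
  shows "sm (sum w S) x = msum M (\<lambda>n. sm (w n) x) S"
  using assms
proof (induction S rule: finite_induct)
  case (insert a S)
  have "msum M (\<lambda>n. sm (w n) x) (insert a S) = ad (sm (w a) x) (msum M (\<lambda>n. sm (w n) x) S)"
    using insert by (intro msum_insert) auto
  then show ?case using insert by (simp add: sm_dist1)
qed simp

lemma mg_unique:
  assumes e: "\<And>n. e n \<in> mg n" and F: "finite F" and out: "\<And>n. n \<notin> F \<Longrightarrow> e n = z"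
    and s: "msum M e F = z"
  shows "e n = z"
proof -
  have sub: "{n. e n \<noteq> z} = {n\<in>F. e n \<noteq> z}" using out by auto
  have "msum M e {n. e n \<noteq> z} = z"
    using s msum_drop[OF F, of e] e mg_car sub by metis
  then have P2: "(\<forall>n. e n \<in> mg n) \<and> finite {n. e n \<noteq> z} \<and> z = msum M e {n. e n \<noteq> z}"
    using e F sub by auto
  have P1: "(\<forall>n. (\<lambda>_. z) n \<in> mg n) \<and> finite {n. (\<lambda>_. z) n \<noteq> z} \<and> z = msum M (\<lambda>_. z) {n. (\<lambda>_. z) n \<noteq> z}"
    by simp
  have "e = (\<lambda>_. z)"
    by (rule ex1_eq[where P="\<lambda>c. (\<forall>n. c n \<in> mg n) \<and> finite {n. c n \<noteq> z} \<and> z = msum M c {n. c n \<noteq> z}",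
          OF M_decomp[OF z_car] P2 P1])
  then show ?thesis by simp
qed

lemma ann_homog:
  assumes a: "a \<in> ann M" and x: "x \<in> mg m"
  shows "sm (comp n a) x = z"
proof -
  have xc: "x \<in> car" using x mg_car by blast
  let ?e = "\<lambda>r. sm (comp (r - m) a) x"
  have "z = sm a x" using a xc unfolding ann_def by simp
  also have "\<dots> = sm (\<Sum>p\<in>csupp a. comp p a) x" using comp_props[of a] by metis
  also have "\<dots> = msum M (\<lambda>p. sm (comp p a) x) (csupp a)"
    by (rule msum_sm_left[OF finite_csupp xc])
  also have "\<dots> = msum M ?e ((\<lambda>p. p + m) ` csupp a)"
    by (subst msum_reindex) (auto simp: inj_on_def xc)
  finally have s: "msum M ?e ((\<lambda>p. p + m) ` csupp a) = z" by simp
  have "?e (n + m) = z"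
  proof (rule mg_unique[OF _ _ _ s])
    show "?e r \<in> mg r" for r using sm_mg[OF comp_gr x, of "r - m" a] by simp
    show "r \<notin> (\<lambda>p. p + m) ` csupp a \<Longrightarrow> ?e r = z" for r
    proof -
      assume "r \<notin> (\<lambda>p. p + m) ` csupp a"
      then have "comp (r - m) a = 0" unfolding csupp_def by (auto simp: image_iff)
      then show ?thesis using xc by simp
    qed
  qed simp
  then show ?thesis by simp
qed

lemma ann_comp:
  assumes a: "a \<in> ann M" shows "comp n a \<in> ann M"
  unfolding ann_def
proof (intro CollectI ballI)
  fix x assume xc: "x \<in> car"
  obtain c where c: "\<forall>n. c n \<in> mg n" "finite {n. c n \<noteq> z}" "x = msum M c {n. c n \<noteq> z}"
    using M_decomp[OF xc] by blast
  have cc: "\<And>n. c n \<in> car" using c(1) mg_car by blast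
  have "sm (comp n a) x = msum M (\<lambda>m. sm (comp n a) (c m)) {n. c n \<noteq> z}"
    using c(3) sm_msum[OF c(2)] cc by metis
  also have "\<dots> = msum M (\<lambda>m. z) {n. c n \<noteq> z}"
    by (rule msum_cong) (use ann_homog[OF a] c(1) in blast)
  also have "\<dots> = z"
    unfolding msum_def by (rule foldr_zs)
  finally show "sm (comp n a) x = z" .
qed

lemma ann_add: "a \<in> ann M \<Longrightarrow> b \<in> ann M \<Longrightarrow> a + b \<in> ann M"
  unfolding ann_def by (auto simp: sm_dist1)
lemma ann_zero: "0 \<in> ann M" unfolding ann_def by auto
lemma ann_neg: "a \<in> ann M \<Longrightarrow> - a \<in> ann M"
  unfolding ann_def by (auto simp: sm_mult[of _ "-1" a, simplified])
lemma ann_left: "a \<in> ann M \<Longrightarrow> b * a \<in> ann M"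
  unfolding ann_def by (auto simp: sm_mult)
lemma ann_right: "a \<in> ann M \<Longrightarrow> a * b \<in> ann M"
  unfolding ann_def by (auto simp: sm_mult)

lemma ann_d_homog: assumes a: "a \<in> ann M" "a \<in> gr p" shows "d a \<in> ann M"
  unfolding ann_def
proof (intro CollectI ballI)
  fix x assume xc: "x \<in> car"
  have "z = dl (sm a x)" using a xc unfolding ann_def by simp
  also have "\<dots> = ad (sm (d a) x) (sm (sgnd p * a) (dl x))" by (rule dl_leib[OF a(2) xc])
  also have "sm (sgnd p * a) (dl x) = z" using a xc by (simp add: sm_mult ann_def)
  finally show "sm (d a) x = z" using xc by simp
qed

end

lemma foldr_sum_list: "foldr (\<lambda>n acc. c n + acc) xs 0 = sum_list (map c xs)"
  by (induction xs) auto

lemma msum_regmod: "msum (regmod gr d) c S = sum c S"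
proof (cases "finite S")
  case True
  have "msum (regmod gr d) c S = sum_list (map c (sorted_list_of_set S))"
    unfolding msum_def regmod_def by (simp add: foldr_sum_list)
  also have "\<dots> = sum c S" using True by (simp add: sum_list_distinct_conv_sum_set)
  finally show ?thesis .
qed (simp add: msum_def regmod_def)

lemma foldr_cong_gen: "\<forall>n\<in>set xs. c n = c' n \<Longrightarrow> foldr (\<lambda>n acc. madd M (c n) acc) xs z0 = foldr (\<lambda>n acc. madd M (c' n) acc) xs z0"
  by (induction xs) auto

lemma msum_cong_gen: "(\<And>n. n \<in> S \<Longrightarrow> c n = c' n) \<Longrightarrow> msum M c S = msum M c' S"
proof -
  assume "\<And>n. n \<in> S \<Longrightarrow> c n = c' n"
  then have "\<forall>n\<in>set (sorted_list_of_set S). c n = c' n" by (cases "finite S") auto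
  then show ?thesis unfolding msum_def by (rule foldr_cong_gen)
qed

context gda begin

abbreviation "J \<equiv> dgrad gr d"

lemma J_iff: "j \<in> J \<longleftrightarrow> (\<forall>M :: ('a, 'a muniv) dgmod. dg_simple gr d M \<longrightarrow> j \<in> ann M)"
  unfolding dgrad_def by blast

lemma simple_dgm: "dg_simple gr d M \<Longrightarrow> dgm sc gr d M"
  unfolding dgm_def dgm_axioms_def dg_simple_def using gda_axioms by blast

lemma J_zero: "0 \<in> J" unfolding J_iff using dgm.ann_zero simple_dgm by blast
lemma J_add: "a \<in> J \<Longrightarrow> b \<in> J \<Longrightarrow> a + b \<in> J" unfolding J_iff using dgm.ann_add simple_dgm by blast
lemma J_neg: "a \<in> J \<Longrightarrow> - a \<in> J" unfolding J_iff using dgm.ann_neg simple_dgm by blast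
lemma J_left: "a \<in> J \<Longrightarrow> b * a \<in> J" unfolding J_iff using dgm.ann_left simple_dgm by blast
lemma J_right: "a \<in> J \<Longrightarrow> a * b \<in> J" unfolding J_iff using dgm.ann_right simple_dgm by blast
lemma J_comp: "a \<in> J \<Longrightarrow> comp n a \<in> J" unfolding J_iff using dgm.ann_comp simple_dgm by blast
lemma J_d_homog: "a \<in> J \<Longrightarrow> a \<in> gr p \<Longrightarrow> d a \<in> J" unfolding J_iff using dgm.ann_d_homog simple_dgm by blast
lemma J_diff: "a \<in> J \<Longrightarrow> b \<in> J \<Longrightarrow> a - b \<in> J" using J_add J_neg by (metis diff_conv_add_uminus)
lemma J_sum: "(\<And>i. i \<in> S \<Longrightarrow> f i \<in> J) \<Longrightarrow> sum f S \<in> J"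
  by (induction S rule: infinite_finite_induct) (auto intro: J_add J_zero)
lemma J_d: "a \<in> J \<Longrightarrow> d a \<in> J"
proof -
  assume a: "a \<in> J"
  have "d a = (\<Sum>n\<in>csupp a. d (comp n a))" using comp_props[of a] d_sum by metis
  also have "\<dots> \<in> J" by (rule J_sum) (use J_d_homog J_comp a comp_gr in blast)
  finally show ?thesis .
qed
lemma J_alpha: "a \<in> J \<Longrightarrow> alpha a \<in> J"
  unfolding alpha_def by (rule J_sum) (use J_comp J_left in blast)

definition ideal_ok :: "'a set \<Rightarrow> bool" where
  "ideal_ok I \<longleftrightarrow> 0 \<in> I \<and> (\<forall>x\<in>I. \<forall>y\<in>I. x + y \<in> I) \<and> (\<forall>x\<in>I. - x \<in> I) \<and>
     (\<forall>a. \<forall>x\<in>I. a * x \<in> I) \<and> (\<forall>x\<in>I. d x \<in> I) \<and> (\<forall>x\<in>I. \<forall>n. comp n x \<in> I)"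

lemma left_dg_ideal_iff: "left_dg_ideal gr d I \<longleftrightarrow> ideal_ok I"
proof
  assume L: "left_dg_ideal gr d I"
  then have L': "0 \<in> I \<and> (\<forall>x\<in>I. \<forall>y\<in>I. x + y \<in> I) \<and> (\<forall>x\<in>I. - x \<in> I) \<and>
     (\<forall>a. \<forall>x\<in>I. a * x \<in> I) \<and> (\<forall>x\<in>I. d x \<in> I)"
    unfolding left_dg_ideal_def dg_submodule_def regmod_def by simp
  have "\<forall>x\<in>I. \<forall>c. ((\<forall>n. c n \<in> gr n) \<and> finite {n. c n \<noteq> 0} \<and>
                     x = sum c {n. c n \<noteq> 0}) \<longrightarrow> (\<forall>n. c n \<in> I)"
    using L unfolding left_dg_ideal_def dg_submodule_def msum_regmod
    by (simp add: regmod_def)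
  then have "\<forall>x\<in>I. \<forall>n. comp n x \<in> I"
  proof (intro ballI allI)
    fix x n assume H: "\<forall>x\<in>I. \<forall>c. ((\<forall>n. c n \<in> gr n) \<and> finite {n. c n \<noteq> 0} \<and>
                     x = sum c {n. c n \<noteq> 0}) \<longrightarrow> (\<forall>n. c n \<in> I)" and x: "x \<in> I"
    have "(\<forall>n. comp n x \<in> gr n) \<and> finite {n. comp n x \<noteq> 0} \<and> x = sum (\<lambda>n. comp n x) {n. comp n x \<noteq> 0}"
      using comp_props[of x] unfolding csupp_def by blast
    then have "\<forall>n. comp n x \<in> I" using spec[OF bspec[OF H x], of "\<lambda>n. comp n x"] by simp
    then show "comp n x \<in> I" by blast
  qed
  then show "ideal_ok I" using L' unfolding ideal_ok_def by blast
next
  assume I: "ideal_ok I"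
  have "\<forall>x\<in>I. \<forall>c. ((\<forall>n. c n \<in> gr n) \<and> finite {n. c n \<noteq> 0} \<and>
                     x = sum c {n. c n \<noteq> 0}) \<longrightarrow> (\<forall>n. c n \<in> I)"
  proof (intro ballI allI impI)
    fix x c n assume x: "x \<in> I" and c: "(\<forall>n. c n \<in> gr n) \<and> finite {n. c n \<noteq> 0} \<and> x = sum c {n. c n \<noteq> 0}"
    have "comp n x = c n" by (rule comp_unique[where F="{n. c n \<noteq> 0}"]) (use c in auto)
    then show "c n \<in> I" using I x unfolding ideal_ok_def by metis
  qed
  then show "left_dg_ideal gr d I"
    using I unfolding left_dg_ideal_def dg_submodule_def ideal_ok_def
    by (simp add: regmod_def msum_regmod[unfolded regmod_def])
qed

end

context gda begin

definition Jh :: "'a set" where "Jh = {j \<in> J. \<exists>p. j \<in> gr p}"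

definition L :: "nat \<Rightarrow> 'a set" where
  "L i = {x. \<forall>xs. length xs = i \<and> set xs \<subseteq> Jh \<longrightarrow> prod_list xs * x = 0}"

lemma prod_homog: "set xs \<subseteq> Jh \<Longrightarrow> \<exists>p. prod_list xs \<in> gr p"
proof (induction xs)
  case Nil then show ?case using gr_one by auto
next
  case (Cons a xs)
  then obtain p q where "a \<in> gr p" "prod_list xs \<in> gr q" unfolding Jh_def by auto
  then have "a * prod_list xs \<in> gr (p + q)" by (rule gr_mult)
  then show ?case by auto
qed

lemma L0: "L 0 = {0}" unfolding L_def by auto

lemma L_top: assumes "nilpotent_set J" shows "\<exists>k. L k = UNIV"
proof -
  obtain k where k: "\<forall>xs. length xs = k \<and> set xs \<subseteq> J \<longrightarrow> prod_list xs = 0"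
    using assms unfolding nilpotent_set_def by blast
  have "L k = UNIV" unfolding L_def using k Jh_def by auto
  then show ?thesis by blast
qed

lemma L_mono: "L i \<subseteq> L (Suc i)"
proof
  fix x assume x: "x \<in> L i"
  show "x \<in> L (Suc i)" unfolding L_def
  proof (intro CollectI allI impI)
    fix xs :: "'a list" assume xs: "length xs = Suc i \<and> set xs \<subseteq> Jh"
    then obtain j ys where "xs = j # ys" by (cases xs) auto
    then show "prod_list xs * x = 0" using x xs unfolding L_def by (auto simp: mult.assoc)
  qed
qed

lemma Jh_comp: "j \<in> J \<Longrightarrow> comp n j \<in> Jh" unfolding Jh_def using J_comp by blast

lemma L_J: assumes j: "j \<in> J" and x: "x \<in> L (Suc i)" shows "j * x \<in> L i"
  unfolding L_def
proof (intro CollectI allI impI)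
  fix xs :: "'a list" assume xs: "length xs = i \<and> set xs \<subseteq> Jh"
  have "prod_list xs * (j * x) = prod_list xs * ((\<Sum>n\<in>csupp j. comp n j) * x)"
    using comp_props[of j] by metis
  also have "\<dots> = (\<Sum>n\<in>csupp j. prod_list (xs @ [comp n j]) * x)"
    by (simp add: sum_distrib_left sum_distrib_right mult.assoc)
  also have "\<dots> = 0"
  proof (rule sum.neutral, intro ballI)
    fix n
    have "length (xs @ [comp n j]) = Suc i \<and> set (xs @ [comp n j]) \<subseteq> Jh" using xs Jh_comp[OF j] by auto
    then show "prod_list (xs @ [comp n j]) * x = 0" using x unfolding L_def by blast
  qed
  finally show "prod_list xs * (j * x) = 0" .
qed

lemma L_dprod:
  "\<forall>zs x. length zs + length xs = i \<and> set zs \<subseteq> Jh \<and> set xs \<subseteq> Jh \<and> x \<in> L i \<longrightarrow>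
     prod_list zs * d (prod_list xs) * x = 0"
proof (induction xs)
  case Nil then show ?case by simp
next
  case (Cons j xs)
  show ?case
  proof (intro allI impI)
    fix zs x assume H: "length zs + length (j # xs) = i \<and> set zs \<subseteq> Jh \<and> set (j # xs) \<subseteq> Jh \<and> x \<in> L i"
    then obtain p where jp: "j \<in> gr p" "j \<in> J" unfolding Jh_def by auto
    have dj: "d j \<in> Jh" unfolding Jh_def using J_d jp d_gr by blast
    have "prod_list zs * d (prod_list (j # xs)) * x =
        prod_list (zs @ d j # xs) * x + sgnd p * (prod_list (zs @ [j]) * d (prod_list xs) * x)"
      using leib[OF jp(1), of "prod_list xs"]
      by (simp add: distrib_left distrib_right mult.assoc sgnd_central)
    also have "prod_list (zs @ d j # xs) * x = 0"
    proof -
      have "length (zs @ d j # xs) = i \<and> set (zs @ d j # xs) \<subseteq> Jh" using H dj by auto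
      then show ?thesis using H unfolding L_def by blast
    qed
    also have "prod_list (zs @ [j]) * d (prod_list xs) * x = 0"
    proof -
      have "length (zs @ [j]) + length xs = i \<and> set (zs @ [j]) \<subseteq> Jh \<and> set xs \<subseteq> Jh \<and> x \<in> L i"
        using H by auto
      then show ?thesis using Cons.IH by blast
    qed
    finally show "prod_list zs * d (prod_list (j # xs)) * x = 0" by simp
  qed
qed

lemma L_ideal: "ideal_ok (L i)"
  unfolding ideal_ok_def
proof (intro conjI ballI allI)
  show "0 \<in> L i" unfolding L_def by simp
  show "x + y \<in> L i" if "x \<in> L i" "y \<in> L i" for x y
    using that unfolding L_def by (simp add: distrib_left)
  show "- x \<in> L i" if "x \<in> L i" for x
    using that unfolding L_def by simp
  show "a * x \<in> L i" if x: "x \<in> L i" for a x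
    unfolding L_def
  proof (intro CollectI allI impI)
    fix xs :: "'a list" assume xs: "length xs = i \<and> set xs \<subseteq> Jh"
    show "prod_list xs * (a * x) = 0"
    proof (cases xs rule: rev_cases)
      case Nil
      then have "x = 0" using x xs unfolding L_def by auto
      then show ?thesis by simp
    next
      case (snoc ys j)
      then have j: "j \<in> J" "\<exists>p. j \<in> gr p" using xs unfolding Jh_def by auto
      have jc: "j * comp n a \<in> Jh" for n
        using j J_right gr_mult unfolding Jh_def by blast
      have "prod_list xs * (a * x) = prod_list ys * (j * (\<Sum>n\<in>csupp a. comp n a)) * x"
        using snoc comp_props[of a] by (metis mult.assoc prod_list.append prod_list.Cons prod_list.Nil mult_1_right)
      also have "\<dots> = (\<Sum>n\<in>csupp a. prod_list (ys @ [j * comp n a]) * x)"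
        by (simp add: sum_distrib_left sum_distrib_right mult.assoc)
      also have "\<dots> = 0"
      proof (rule sum.neutral, intro ballI)
        fix n
        have "length (ys @ [j * comp n a]) = i \<and> set (ys @ [j * comp n a]) \<subseteq> Jh" using xs snoc jc by auto
        then show "prod_list (ys @ [j * comp n a]) * x = 0" using x unfolding L_def by blast
      qed
      finally show ?thesis .
    qed
  qed
  show "comp n x \<in> L i" if x: "x \<in> L i" for x n
    unfolding L_def
  proof (intro CollectI allI impI)
    fix xs :: "'a list" assume xs: "length xs = i \<and> set xs \<subseteq> Jh"
    obtain p where p: "prod_list xs \<in> gr p" using prod_homog xs by blast
    have "prod_list xs * comp n x = comp (n + p) (prod_list xs * x)"
      by (simp add: comp_mult_left[OF p])
    also have "\<dots> = 0" using x xs unfolding L_def by simp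
    finally show "prod_list xs * comp n x = 0" .
  qed
  show "d x \<in> L i" if x: "x \<in> L i" for x
    unfolding L_def
  proof (intro CollectI allI impI)
    fix xs :: "'a list" assume xs: "length xs = i \<and> set xs \<subseteq> Jh"
    obtain p where p: "prod_list xs \<in> gr p" using prod_homog xs by blast
    have "0 = d (prod_list xs * x)" using x xs unfolding L_def by simp
    also have "\<dots> = d (prod_list xs) * x + sgnd p * prod_list xs * d x" by (rule leib[OF p])
    also have "d (prod_list xs) * x = 0" using L_dprod[of xs i] xs x by (metis list.size(3) add_0 prod_list.Nil mult_1_left empty_subsetI set_empty)
    finally have "sgnd p * (prod_list xs * d x) = 0" by (simp add: mult.assoc)
    then have "sgnd p * (sgnd p * (prod_list xs * d x)) = 0" by simp
    then show "prod_list xs * d x = 0" by (simp add: mult.assoc[symmetric] sgnd_simps)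
  qed
qed

end

lemma pair00[simp]: "(0, 0) = (0 :: 'a::zero \<times> 'b::zero)" by (simp add: zero_prod_def)

context gda begin

definition vgr :: "int \<Rightarrow> ('a \<times> 'a) set" where "vgr n = gr n \<times> gr (n + 1)"
definition vcomp :: "int \<Rightarrow> 'a \<times> 'a \<Rightarrow> 'a \<times> 'a" where
  "vcomp n v = (comp n (fst v), comp (n + 1) (snd v))"
definition vact :: "'a \<Rightarrow> 'a \<times> 'a \<Rightarrow> 'a \<times> 'a" where "vact a v = (a * fst v, a * snd v)"
definition vd :: "bool \<Rightarrow> 'a \<times> 'a \<Rightarrow> 'a \<times> 'a" where
  "vd t v = (d (fst v) + (if t then alpha (snd v) else 0), d (snd v))"
definition vsupp :: "'a \<times> 'a \<Rightarrow> int set" where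
  "vsupp v = csupp (fst v) \<union> (\<lambda>q. q - 1) ` csupp (snd v)"

lemma vcomp_gr: "vcomp n v \<in> vgr n" unfolding vcomp_def vgr_def by simp
lemma vcomp_add: "vcomp n (v + w) = vcomp n v + vcomp n w" unfolding vcomp_def by (simp add: comp_add)
lemma vcomp_neg: "vcomp n (- v) = - vcomp n v" unfolding vcomp_def by (simp add: comp_neg)
lemma vcomp_diff: "vcomp n (v - w) = vcomp n v - vcomp n w" unfolding vcomp_def by (simp add: comp_diff)
lemma vcomp_0[simp]: "vcomp n 0 = 0" unfolding vcomp_def by simp
lemma vcomp_sum: "vcomp n (sum f S) = (\<Sum>i\<in>S. vcomp n (f i))"
  by (induction S rule: infinite_finite_induct) (auto simp: vcomp_add)
lemma vcomp_homog: "w \<in> vgr m \<Longrightarrow> vcomp n w = (if n = m then w else 0)"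
  unfolding vcomp_def vgr_def by (cases w) (auto simp: comp_homog)
lemma finite_vsupp[simp]: "finite (vsupp v)" unfolding vsupp_def by simp
lemma vcomp_out: "n \<notin> vsupp v \<Longrightarrow> vcomp n v = 0"
  unfolding vcomp_def vsupp_def csupp_def by (auto simp: image_iff) (drule spec[of _ "n + 1"], simp)

lemma v_sum: assumes F: "finite F" "vsupp v \<subseteq> F" shows "v = (\<Sum>n\<in>F. vcomp n v)"
proof -
  have 1: "fst v = (\<Sum>n\<in>F. comp n (fst v))"
    by (rule comp_sum_sup) (use F in \<open>auto simp: vsupp_def\<close>)
  have "(\<Sum>n\<in>F. comp (n + 1) (snd v)) = (\<Sum>m\<in>(\<lambda>n. n + 1) ` F. comp m (snd v))"
    by (subst sum.reindex) (auto simp: inj_on_def)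
  also have "\<dots> = snd v"
  proof (rule comp_sum_sup[symmetric])
    show "finite ((\<lambda>n. n + 1) ` F)" using F by simp
    show "csupp (snd v) \<subseteq> (\<lambda>n. n + 1) ` F"
    proof
      fix q assume "q \<in> csupp (snd v)"
      then have "q - 1 \<in> F" using F unfolding vsupp_def by auto
      then show "q \<in> (\<lambda>n. n + 1) ` F" by (auto simp: image_iff intro!: bexI[of _ "q - 1"])
    qed
  qed
  finally have 2: "snd v = (\<Sum>n\<in>F. comp (n + 1) (snd v))" by simp
  show ?thesis using 1 2 unfolding vcomp_def by (simp add: sum_prod prod_eq_iff)
qed

lemma vact_gr: "a \<in> gr p \<Longrightarrow> w \<in> vgr n \<Longrightarrow> vact a w \<in> vgr (p + n)"
  unfolding vact_def vgr_def using gr_mult by (auto simp: add.assoc)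
lemma vd_gr: "w \<in> vgr n \<Longrightarrow> vd t w \<in> vgr (n + 1)"
proof -
  assume w: "w \<in> vgr n"
  have sw: "snd w \<in> gr (n + 1)" using w unfolding vgr_def by auto
  have "d (snd w) \<in> gr (n + 1 + 1)" by (rule d_gr[OF sw])
  moreover have "d (fst w) + (if t then alpha (snd w) else 0) \<in> gr (n + 1)"
    using w d_gr alpha_gr gr_add unfolding vgr_def by auto
  ultimately show ?thesis unfolding vd_def vgr_def by simp
qed
lemma vd_add: "vd t (v + w) = vd t v + vd t w" unfolding vd_def by (simp add: d_add alpha_add)
lemma alpha_neg: "alpha (- a) = - alpha a"
  by (rule comp_ext) (simp add: comp_alpha comp_neg)
lemma vd_neg: "vd t (- v) = - vd t v"
  unfolding vd_def by (simp add: d_neg alpha_neg)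
lemma vd_diff: "vd t (v - w) = vd t v - vd t w" using vd_add[of t v "- w"] vd_neg by simp
lemma vd_vd: "vd t (vd t v) = 0"
  unfolding vd_def using alpha_d[of "snd v"] by (simp add: d_add)
lemma vact_add: "vact a (v + w) = vact a v + vact a w" unfolding vact_def by (simp add: distrib_left)
lemma vact_neg: "vact a (- v) = - vact a v" unfolding vact_def by simp
lemma vact_diff: "vact a (v - w) = vact a v - vact a w" unfolding vact_def by (simp add: right_diff_distrib)
lemma vact_0[simp]: "vact a 0 = 0" unfolding vact_def by simp
lemma vact_mult: "vact (a * b) v = vact a (vact b v)" unfolding vact_def by (simp add: mult.assoc)
lemma vact_one: "vact 1 v = v" unfolding vact_def by simp
lemma vact_dist: "vact (a + b) v = vact a v + vact b v" unfolding vact_def by (simp add: distrib_right)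
lemma vd_leib: assumes a: "a \<in> gr p" shows "vd t (vact a v) = vact (d a) v + vact (sgnd p * a) (vd t v)"
  unfolding vd_def vact_def using leib[OF a] alpha_mult[OF a]
  by (simp add: distrib_left mult.assoc)

definition vok :: "('a \<times> 'a) set \<Rightarrow> bool \<Rightarrow> bool" where
  "vok S t \<longleftrightarrow> 0 \<in> S \<and> (\<forall>v\<in>S. \<forall>w\<in>S. v + w \<in> S) \<and> (\<forall>v\<in>S. - v \<in> S) \<and>
     (\<forall>a. \<forall>v\<in>S. vact a v \<in> S) \<and> (\<forall>v\<in>S. vd t v \<in> S) \<and> (\<forall>v\<in>S. \<forall>n. vcomp n v \<in> S)"

lemma vok_diff: "vok S t \<Longrightarrow> v \<in> S \<Longrightarrow> w \<in> S \<Longrightarrow> v - w \<in> S"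
  unfolding vok_def by (metis diff_conv_add_uminus)
lemma vok_sum: "vok S t \<Longrightarrow> (\<And>i. i \<in> A \<Longrightarrow> f i \<in> S) \<Longrightarrow> sum f A \<in> S"
  by (induction A rule: infinite_finite_induct) (auto simp: vok_def)

definition emb :: "'a \<times> 'a \<Rightarrow> nat \<Rightarrow> 'a" where "emb v = (\<lambda>k. if k = 0 then fst v else snd v)"
lemma inj_emb: "inj emb"
proof (rule injI)
  fix v w assume "emb v = emb w"
  then have "emb v 0 = emb w 0" "emb v 1 = emb w 1" by auto
  then show "v = w" unfolding emb_def by (simp add: prod_eq_iff)
qed

definition cls :: "('a \<times> 'a) set \<Rightarrow> 'a \<times> 'a \<Rightarrow> 'a muniv" where
  "cls P v = emb ` ((\<lambda>p. v + p) ` P)"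

lemma cls_eq: assumes P: "vok P t" shows "cls P v = cls P w \<longleftrightarrow> v - w \<in> P"
proof -
  have "cls P v = cls P w \<longleftrightarrow> (\<lambda>p. v + p) ` P = (\<lambda>p. w + p) ` P"
    unfolding cls_def by (rule inj_image_eq_iff[OF inj_emb])
  also have "\<dots> \<longleftrightarrow> v - w \<in> P"
  proof
    assume e: "(\<lambda>p. v + p) ` P = (\<lambda>p. w + p) ` P"
    have "v + 0 \<in> (\<lambda>p. v + p) ` P" using P unfolding vok_def by blast
    then obtain p where "p \<in> P" "v = w + p" using e by auto
    then show "v - w \<in> P" by (simp add: add.commute)
  next
    assume vw: "v - w \<in> P"
    have "w - v \<in> P" using vok_diff[OF P _ vw, of 0] P unfolding vok_def by simp
    show "(\<lambda>p. v + p) ` P = (\<lambda>p. w + p) ` P"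
    proof (intro equalityI subsetI)
      fix x assume "x \<in> (\<lambda>p. v + p) ` P"
      then obtain p where p: "p \<in> P" "x = v + p" by auto
      then have "(v - w) + p \<in> P" using vw P unfolding vok_def by blast
      moreover have "x = w + ((v - w) + p)" using p by simp
      ultimately show "x \<in> (\<lambda>p. w + p) ` P" by blast
    next
      fix x assume "x \<in> (\<lambda>p. w + p) ` P"
      then obtain p where p: "p \<in> P" "x = w + p" by auto
      then have "(w - v) + p \<in> P" using \<open>w - v \<in> P\<close> P unfolding vok_def by blast
      moreover have "x = v + ((w - v) + p)" using p by simp
      ultimately show "x \<in> (\<lambda>p. v + p) ` P" by blast
    qed
  qed
  finally show ?thesis .
qed

definition rep :: "('a \<times> 'a) set \<Rightarrow> ('a \<times> 'a) set \<Rightarrow> 'a muniv \<Rightarrow> 'a \<times> 'a" where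
  "rep P Q X = (SOME v. v \<in> Q \<and> cls P v = X)"

lemma rep_cls: "v \<in> Q \<Longrightarrow> rep P Q (cls P v) \<in> Q \<and> cls P (rep P Q (cls P v)) = cls P v"
  unfolding rep_def by (rule someI[of "\<lambda>w. w \<in> Q \<and> cls P w = cls P v" v]) simp

definition qmod :: "('a \<times> 'a) set \<Rightarrow> ('a \<times> 'a) set \<Rightarrow> bool \<Rightarrow> ('a, 'a muniv) dgmod" where
  "qmod P Q t = \<lparr>mcar = cls P ` Q, mzero = cls P 0,
     madd = \<lambda>X Y. cls P (rep P Q X + rep P Q Y), mneg = \<lambda>X. cls P (- rep P Q X),
     msmul = \<lambda>a X. cls P (vact a (rep P Q X)), mgr = \<lambda>n. cls P ` (Q \<inter> vgr n),
     mdelta = \<lambda>X. cls P (vd t (rep P Q X))\<rparr>"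

end

locale qm = gda sc gr d for sc :: "'r::comm_ring_1 \<Rightarrow> 'a::ring_1" and gr d +
  fixes P Q :: "('a \<times> 'a) set" and t :: bool
  assumes vP: "vok P t" and vQ: "vok Q t" and PQ: "P \<subseteq> Q"
begin

abbreviation "QM \<equiv> qmod P Q t"
abbreviation "cl \<equiv> cls P"
abbreviation "rp \<equiv> rep P Q"

lemma cl_eq: "cl v = cl w \<longleftrightarrow> v - w \<in> P" by (rule cls_eq[OF vP])

lemma rp_diff: "v \<in> Q \<Longrightarrow> rp (cl v) - v \<in> P"
  using rep_cls[of v Q P] cl_eq by blast
lemma rp_Q: "v \<in> Q \<Longrightarrow> rp (cl v) \<in> Q"
  using rep_cls[of v Q P] by blast

lemma Q0: "0 \<in> Q" using vQ unfolding vok_def by blast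
lemma Qadd: "v \<in> Q \<Longrightarrow> w \<in> Q \<Longrightarrow> v + w \<in> Q" using vQ unfolding vok_def by blast
lemma Qneg: "v \<in> Q \<Longrightarrow> - v \<in> Q" using vQ unfolding vok_def by blast
lemma Qact: "v \<in> Q \<Longrightarrow> vact a v \<in> Q" using vQ unfolding vok_def by blast
lemma Qd: "v \<in> Q \<Longrightarrow> vd t v \<in> Q" using vQ unfolding vok_def by blast
lemma Qcomp: "v \<in> Q \<Longrightarrow> vcomp n v \<in> Q" using vQ unfolding vok_def by blast
lemma P0: "0 \<in> P" using vP unfolding vok_def by blast
lemma Padd: "v \<in> P \<Longrightarrow> w \<in> P \<Longrightarrow> v + w \<in> P" using vP unfolding vok_def by blast
lemma Pneg: "v \<in> P \<Longrightarrow> - v \<in> P" using vP unfolding vok_def by blast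
lemma Pact: "v \<in> P \<Longrightarrow> vact a v \<in> P" using vP unfolding vok_def by blast
lemma Pd: "v \<in> P \<Longrightarrow> vd t v \<in> P" using vP unfolding vok_def by blast
lemma Pcomp: "v \<in> P \<Longrightarrow> vcomp n v \<in> P" using vP unfolding vok_def by blast
lemma Pdiff: "v \<in> P \<Longrightarrow> w \<in> P \<Longrightarrow> v - w \<in> P" using vok_diff[OF vP] by blast

lemma q_add: "v \<in> Q \<Longrightarrow> w \<in> Q \<Longrightarrow> madd QM (cl v) (cl w) = cl (v + w)"
proof -
  assume vw: "v \<in> Q" "w \<in> Q"
  have "(rp (cl v) + rp (cl w)) - (v + w) = (rp (cl v) - v) + (rp (cl w) - w)" by simp
  also have "\<dots> \<in> P" using rp_diff vw Padd by simp
  finally show ?thesis unfolding qmod_def using cl_eq by simp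
qed

lemma q_neg: "v \<in> Q \<Longrightarrow> mneg QM (cl v) = cl (- v)"
proof -
  assume v: "v \<in> Q"
  have "(- rp (cl v)) - (- v) = - (rp (cl v) - v)" by simp
  also have "\<dots> \<in> P" by (rule Pneg[OF rp_diff[OF v]])
  finally show ?thesis unfolding qmod_def using cl_eq by simp
qed

lemma q_sm: "v \<in> Q \<Longrightarrow> msmul QM a (cl v) = cl (vact a v)"
proof -
  assume v: "v \<in> Q"
  have "vact a (rp (cl v)) - vact a v = vact a (rp (cl v) - v)" by (simp add: vact_diff)
  also have "\<dots> \<in> P" using rp_diff v Pact by simp
  finally show ?thesis unfolding qmod_def using cl_eq by simp
qed

lemma q_dl: "v \<in> Q \<Longrightarrow> mdelta QM (cl v) = cl (vd t v)"
proof -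
  assume v: "v \<in> Q"
  have "vd t (rp (cl v)) - vd t v = vd t (rp (cl v) - v)" by (simp add: vd_diff)
  also have "\<dots> \<in> P" using rp_diff v Pd by simp
  finally show ?thesis unfolding qmod_def using cl_eq by simp
qed

lemma q_car: "mcar QM = cl ` Q" unfolding qmod_def by simp
lemma q_zero: "mzero QM = cl 0" unfolding qmod_def by simp
lemma q_gr: "mgr QM n = cl ` (Q \<inter> vgr n)" unfolding qmod_def by simp

lemma q_foldr: "\<forall>n\<in>set xs. r n \<in> Q \<Longrightarrow>
  foldr (\<lambda>n acc. madd QM (cl (r n)) acc) xs (cl 0) = cl (sum_list (map r xs)) \<and> sum_list (map r xs) \<in> Q"
  by (induction xs) (auto simp: q_add Q0 Qadd)

lemma q_msum: assumes "finite S" "\<And>n. n \<in> S \<Longrightarrow> r n \<in> Q"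
  shows "msum QM (\<lambda>n. cl (r n)) S = cl (sum r S)"
proof -
  have "msum QM (\<lambda>n. cl (r n)) S = cl (sum_list (map r (sorted_list_of_set S)))"
    unfolding msum_def q_zero using q_foldr[of "sorted_list_of_set S" r] assms by auto
  then show ?thesis using assms by (simp add: sum_list_distinct_conv_sum_set)
qed

lemma Psum: "(\<And>i. i \<in> A \<Longrightarrow> f i \<in> P) \<Longrightarrow> sum f A \<in> P" using vok_sum[OF vP] by blast
lemma Qsum: "(\<And>i. i \<in> A \<Longrightarrow> f i \<in> Q) \<Longrightarrow> sum f A \<in> Q" using vok_sum[OF vQ] by blast

lemma q_decomp:
  assumes v: "v \<in> Q"
  shows "\<exists>!c. (\<forall>n. c n \<in> mgr QM n) \<and> finite {n. c n \<noteq> mzero QM} \<and>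
                        cl v = msum QM c {n. c n \<noteq> mzero QM}"
proof (rule ex1I)
  let ?c = "\<lambda>n. cl (vcomp n v)"
  have sub: "{n. ?c n \<noteq> mzero QM} \<subseteq> vsupp v"
  proof
    fix n assume "n \<in> {n. ?c n \<noteq> mzero QM}"
    then have "vcomp n v \<noteq> 0" using q_zero by auto
    then show "n \<in> vsupp v" using vcomp_out by blast
  qed
  show "(\<forall>n. ?c n \<in> mgr QM n) \<and> finite {n. ?c n \<noteq> mzero QM} \<and> cl v = msum QM ?c {n. ?c n \<noteq> mzero QM}"
  proof (intro conjI allI)
    show "?c n \<in> mgr QM n" for n using Qcomp[OF v] vcomp_gr q_gr by auto
    show fin: "finite {n. ?c n \<noteq> mzero QM}" using finite_subset[OF sub] by simp
    have m: "msum QM ?c {n. ?c n \<noteq> mzero QM} = cl (\<Sum>n\<in>{n. ?c n \<noteq> mzero QM}. vcomp n v)"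
      by (rule q_msum[OF fin]) (use Qcomp v in blast)
    have p: "v - (\<Sum>n\<in>{n. ?c n \<noteq> mzero QM}. vcomp n v) \<in> P"
    proof -
      have "v - (\<Sum>n\<in>{n. ?c n \<noteq> mzero QM}. vcomp n v) =
          (\<Sum>n\<in>vsupp v. vcomp n v) - (\<Sum>n\<in>{n. ?c n \<noteq> mzero QM}. vcomp n v)"
        using v_sum[of "vsupp v" v] by simp
      also have "\<dots> = (\<Sum>n\<in>vsupp v - {n. ?c n \<noteq> mzero QM}. vcomp n v)"
        using sum_diff[OF finite_vsupp sub, of "\<lambda>n. vcomp n v"] by simp
      also have "\<dots> \<in> P"
      proof (rule Psum)
        fix n assume "n \<in> vsupp v - {n. ?c n \<noteq> mzero QM}"
        then have "cl (vcomp n v) = cl 0" using q_zero by auto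
        then show "vcomp n v \<in> P" using cl_eq by simp
      qed
      finally show ?thesis .
    qed
    have "cl v = cl (\<Sum>n\<in>{n. ?c n \<noteq> mzero QM}. vcomp n v)" by (subst cl_eq) (rule p)
    then show "cl v = msum QM ?c {n. ?c n \<noteq> mzero QM}" by (rule trans[OF _ m[symmetric]])
  qed
  fix c assume c: "(\<forall>n. c n \<in> mgr QM n) \<and> finite {n. c n \<noteq> mzero QM} \<and> cl v = msum QM c {n. c n \<noteq> mzero QM}"
  define S where "S = {n. c n \<noteq> mzero QM}"
  define r where "r n = (SOME w. w \<in> Q \<inter> vgr n \<and> cl w = c n)" for n
  have r: "r n \<in> Q \<inter> vgr n \<and> cl (r n) = c n" for n
  proof -
    have "c n \<in> cl ` (Q \<inter> vgr n)" using c q_gr by metis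
    then have "\<exists>w. w \<in> Q \<inter> vgr n \<and> cl w = c n" by (elim imageE) blast
    then show ?thesis unfolding r_def by (rule someI_ex)
  qed
  have fS: "finite S" using c unfolding S_def by blast
  have "msum QM c S = msum QM (\<lambda>n. cl (r n)) S" by (rule msum_cong_gen) (use r in metis)
  also have "\<dots> = cl (sum r S)" by (rule q_msum[OF fS]) (use r in blast)
  finally have "cl v = cl (sum r S)" using c unfolding S_def by metis
  then have "v - sum r S \<in> P" using cl_eq by blast
  then have D: "vcomp m v - (\<Sum>n\<in>S. vcomp m (r n)) \<in> P" for m
    using Pcomp[of "v - sum r S" m] by (simp add: vcomp_diff vcomp_sum)
  show "c = ?c"
  proof
    fix m
    have e: "(\<Sum>n\<in>S. vcomp m (r n)) = (if m \<in> S then r m else 0)"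
    proof -
      have "(\<Sum>n\<in>S. vcomp m (r n)) = (\<Sum>n\<in>S. if m = n then r n else 0)"
        by (rule sum.cong) (use r vcomp_homog in auto)
      then show ?thesis using fS by (simp add: sum.delta)
    qed
    show "c m = ?c m"
    proof (cases "m \<in> S")
      case True
      then have "vcomp m v - r m \<in> P" using D[of m] e by simp
      then have "cl (vcomp m v) = cl (r m)" using cl_eq by blast
      then show ?thesis using r by simp
    next
      case False
      then have "vcomp m v \<in> P" using D[of m] e by simp
      then have "cl (vcomp m v) = cl 0" using cl_eq by simp
      then show ?thesis using False q_zero S_def by auto
    qed
  qed
qed

end

context qm begin

lemma img: "v \<in> Q \<Longrightarrow> cl v \<in> cl ` Q" by blast

lemma q_module: "dg_module gr d QM"
  unfolding dg_module_def q_car q_zero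
proof (intro conjI)
  show "cl 0 \<in> cl ` Q" using Q0 by blast
  show "\<forall>x\<in>cl ` Q. \<forall>y\<in>cl ` Q. madd QM x y \<in> cl ` Q" by (auto simp: q_add intro!: img Qadd)
  show "\<forall>x\<in>cl ` Q. mneg QM x \<in> cl ` Q" by (auto simp: q_neg intro!: img Qneg)
  show "\<forall>x\<in>cl ` Q. \<forall>y\<in>cl ` Q. \<forall>z\<in>cl ` Q. madd QM (madd QM x y) z = madd QM x (madd QM y z)"
    by (auto simp: q_add Qadd add.assoc)
  show "\<forall>x\<in>cl ` Q. \<forall>y\<in>cl ` Q. madd QM x y = madd QM y x" by (auto simp: q_add add.commute)
  show "\<forall>x\<in>cl ` Q. madd QM (cl 0) x = x" by (auto simp: q_add Q0)
  show "\<forall>x\<in>cl ` Q. madd QM (mneg QM x) x = cl 0" by (auto simp: q_add q_neg Qneg)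
  show "\<forall>a. \<forall>x\<in>cl ` Q. msmul QM a x \<in> cl ` Q" by (auto simp: q_sm intro!: img Qact)
  show "\<forall>a b. \<forall>x\<in>cl ` Q. msmul QM (a * b) x = msmul QM a (msmul QM b x)"
    by (auto simp: q_sm Qact vact_mult)
  show "\<forall>x\<in>cl ` Q. msmul QM 1 x = x" by (auto simp: q_sm vact_one)
  show "\<forall>a b. \<forall>x\<in>cl ` Q. msmul QM (a + b) x = madd QM (msmul QM a x) (msmul QM b x)"
    by (auto simp: q_sm q_add Qact vact_dist)
  show "\<forall>a. \<forall>x\<in>cl ` Q. \<forall>y\<in>cl ` Q. msmul QM a (madd QM x y) = madd QM (msmul QM a x) (msmul QM a y)"
    by (auto simp: q_sm q_add Qact Qadd vact_add)
  show "\<forall>n. mgr QM n \<subseteq> cl ` Q \<and> cl 0 \<in> mgr QM n \<and>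
          (\<forall>x\<in>mgr QM n. \<forall>y\<in>mgr QM n. madd QM x y \<in> mgr QM n \<and> mneg QM x \<in> mgr QM n)"
  proof (intro allI conjI ballI)
    fix n
    show "mgr QM n \<subseteq> cl ` Q" unfolding q_gr by blast
    have "(0::'a \<times> 'a) \<in> vgr n" by (simp add: vgr_def mem_Times_iff)
    then show "cl 0 \<in> mgr QM n" unfolding q_gr using Q0 by blast
    fix x y assume "x \<in> mgr QM n" "y \<in> mgr QM n"
    then obtain v w where vw: "v \<in> Q" "v \<in> vgr n" "w \<in> Q" "w \<in> vgr n" "x = cl v" "y = cl w"
      unfolding q_gr by blast
    have "v + w \<in> vgr n" "- v \<in> vgr n" using vw gr_add gr_neg by (auto simp: vgr_def)
    then show "madd QM x y \<in> mgr QM n" "mneg QM x \<in> mgr QM n"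
      unfolding q_gr using vw by (auto simp: q_add q_neg intro!: imageI Qadd Qneg)
  qed
  show "\<forall>p n. \<forall>a\<in>gr p. \<forall>x\<in>mgr QM n. msmul QM a x \<in> mgr QM (p + n)"
    unfolding q_gr by (auto simp: q_sm intro!: imageI Qact vact_gr)
  show "\<forall>x\<in>cl ` Q. \<exists>!c. (\<forall>n. c n \<in> mgr QM n) \<and> finite {n. c n \<noteq> cl 0} \<and>
                        x = msum QM c {n. c n \<noteq> cl 0}"
    using q_decomp unfolding q_zero by blast
  show "\<forall>x\<in>cl ` Q. mdelta QM x \<in> cl ` Q" by (auto simp: q_dl intro!: img Qd)
  show "\<forall>x\<in>cl ` Q. \<forall>y\<in>cl ` Q. mdelta QM (madd QM x y) = madd QM (mdelta QM x) (mdelta QM y)"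
    by (auto simp: q_dl q_add Qd Qadd vd_add)
  show "\<forall>n. \<forall>x\<in>mgr QM n. mdelta QM x \<in> mgr QM (n + 1)"
    unfolding q_gr by (auto simp: q_dl intro!: imageI Qd vd_gr)
  show "\<forall>x\<in>cl ` Q. mdelta QM (mdelta QM x) = cl 0" by (auto simp: q_dl Qd vd_vd)
  show "\<forall>p. \<forall>a\<in>gr p. \<forall>x\<in>cl ` Q.
        mdelta QM (msmul QM a x) = madd QM (msmul QM (d a) x) (msmul QM (sgnd p * a) (mdelta QM x))"
    by (auto simp: q_dl q_sm q_add Qd Qact vd_leib)
qed

lemma q_annihilated: "(\<And>j v. j \<in> JJ \<Longrightarrow> v \<in> Q \<Longrightarrow> vact j v \<in> P) \<Longrightarrow> annihilated JJ QM"
  unfolding annihilated_def q_car q_zero by (auto simp: q_sm cl_eq)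

end

context gda begin

definition lift :: "'a set \<Rightarrow> ('a \<times> 'a) set" where "lift S = S \<times> {0}"

lemma alpha0[simp]: "alpha 0 = 0" unfolding alpha_def csupp_def by simp

lemma lift_vok: assumes "ideal_ok S" shows "vok (lift S) t"
  using assms unfolding vok_def ideal_ok_def lift_def vact_def vd_def vcomp_def
  by (auto simp: mem_Times_iff)

lemma lift_mono: "S \<subseteq> T \<Longrightarrow> lift S \<subseteq> lift T" unfolding lift_def by auto

lemma mem_lift: "(x, y) \<in> lift S \<longleftrightarrow> x \<in> S \<and> y = 0" unfolding lift_def by auto

lemma complement:
  assumes SS: "dg_semisimple_quot gr d J"
    and iP: "ideal_ok P0" and iN: "ideal_ok N0" and iQ: "ideal_ok Q0"
    and PN: "P0 \<subseteq> N0" and NQ: "N0 \<subseteq> Q0"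
    and ann: "\<And>j x. j \<in> J \<Longrightarrow> x \<in> Q0 \<Longrightarrow> j * x \<in> P0"
  shows "\<exists>C. ideal_ok C \<and> P0 \<subseteq> C \<and> C \<subseteq> Q0 \<and> N0 \<inter> C = P0 \<and>
             {y + c | y c. y \<in> N0 \<and> c \<in> C} = Q0"
proof -
  have vP: "vok (lift P0) False" and vN: "vok (lift N0) False" and vQ: "vok (lift Q0) False"
    using lift_vok iP iN iQ by blast+
  have lPN: "lift P0 \<subseteq> lift N0" and lNQ: "lift N0 \<subseteq> lift Q0" and lPQ: "lift P0 \<subseteq> lift Q0"
    using lift_mono PN NQ by blast+
  interpret A1: qm sc gr d "lift P0" "lift N0" False by unfold_locales (fact vP, fact vN, fact lPN)
  interpret A2: qm sc gr d "lift P0" "lift Q0" False by unfold_locales (fact vP, fact vQ, fact lPQ)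
  interpret A3: qm sc gr d "lift N0" "lift Q0" False by unfold_locales (fact vN, fact vQ, fact lNQ)
  interpret M2: dgm sc gr d A2.QM by unfold_locales (rule A2.q_module)
  interpret M3: dgm sc gr d A3.QM by unfold_locales (rule A3.q_module)
  define clP where "clP = cls (lift P0)"
  define clN where "clN = cls (lift N0)"
  define f where "f = (\<lambda>X :: 'a muniv. X)"
  define g where "g = (\<lambda>X. clN (rep (lift P0) (lift Q0) X))"
  have g_cl: "g (clP v) = clN v" if v: "v \<in> lift Q0" for v
  proof -
    have "rep (lift P0) (lift Q0) (clP v) - v \<in> lift N0"
      using A2.rp_diff[OF v] lPN unfolding clP_def by blast
    then show ?thesis unfolding g_def clN_def using A3.cl_eq by blast
  qed
  have car2: "mcar A2.QM = clP ` lift Q0" unfolding clP_def by (rule A2.q_car)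
  have car3: "mcar A3.QM = clN ` lift Q0" unfolding clN_def by (rule A3.q_car)
  have car1: "mcar A1.QM = clP ` lift N0" unfolding clP_def by (rule A1.q_car)
  have hf: "dg_hom gr A1.QM A2.QM f"
    unfolding dg_hom_def f_def car1 car2
  proof (intro conjI ballI allI)
    show "x \<in> clP ` lift Q0" if "x \<in> clP ` lift N0" for x using that lNQ by blast
    show "madd A1.QM x y = madd A2.QM x y" if xy: "x \<in> clP ` lift N0" "y \<in> clP ` lift N0" for x y
    proof -
      obtain v w where vw: "v \<in> lift N0" "w \<in> lift N0" "x = clP v" "y = clP w" using xy by blast
      then have "v \<in> lift Q0" "w \<in> lift Q0" using lNQ by auto
      then show ?thesis using vw unfolding clP_def by (simp add: A1.q_add A2.q_add)
    qed
    show "msmul A1.QM a x = msmul A2.QM a x" if xy: "x \<in> clP ` lift N0" for a x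
    proof -
      obtain v where vw: "v \<in> lift N0" "x = clP v" using xy by blast
      then have "v \<in> lift Q0" using lNQ by auto
      then show ?thesis using vw unfolding clP_def by (simp add: A1.q_sm A2.q_sm)
    qed
    show "x \<in> mgr A2.QM n" if "x \<in> mgr A1.QM n" for x n
      using that lNQ unfolding A1.q_gr A2.q_gr by blast
    show "mdelta A1.QM x = mdelta A2.QM x" if xy: "x \<in> clP ` lift N0" for x
    proof -
      obtain v where vw: "v \<in> lift N0" "x = clP v" using xy by blast
      then have "v \<in> lift Q0" using lNQ by auto
      then show ?thesis using vw unfolding clP_def by (simp add: A1.q_dl A2.q_dl)
    qed
  qed
  have hg: "dg_hom gr A2.QM A3.QM g"
    unfolding dg_hom_def car2 car3
  proof (intro conjI ballI allI)
    show "g x \<in> clN ` lift Q0" if "x \<in> clP ` lift Q0" for x using that g_cl by auto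
    show "g (madd A2.QM x y) = madd A3.QM (g x) (g y)" if xy: "x \<in> clP ` lift Q0" "y \<in> clP ` lift Q0" for x y
    proof -
      obtain v w where vw: "v \<in> lift Q0" "w \<in> lift Q0" "x = clP v" "y = clP w" using xy by blast
      have "v + w \<in> lift Q0" using vw A2.Qadd by blast
      then show ?thesis using vw g_cl unfolding clP_def clN_def by (simp add: A2.q_add A3.q_add)
    qed
    show "g (msmul A2.QM a x) = msmul A3.QM a (g x)" if xy: "x \<in> clP ` lift Q0" for a x
    proof -
      obtain v where vw: "v \<in> lift Q0" "x = clP v" using xy by blast
      have "vact a v \<in> lift Q0" using vw A2.Qact by blast
      then show ?thesis using vw g_cl unfolding clP_def clN_def by (simp add: A2.q_sm A3.q_sm)
    qed
    show "g x \<in> mgr A3.QM n" if xy: "x \<in> mgr A2.QM n" for x n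
    proof -
      obtain v where vw: "v \<in> lift Q0 \<inter> vgr n" "x = clP v" using xy unfolding A2.q_gr clP_def by blast
      then show ?thesis using g_cl unfolding A3.q_gr clN_def by auto
    qed
    show "g (mdelta A2.QM x) = mdelta A3.QM (g x)" if xy: "x \<in> clP ` lift Q0" for x
    proof -
      obtain v where vw: "v \<in> lift Q0" "x = clP v" using xy by blast
      have "vd False v \<in> lift Q0" using vw A2.Qd by blast
      then show ?thesis using vw g_cl unfolding clP_def clN_def by (simp add: A2.q_dl A3.q_dl)
    qed
  qed
  have injf: "inj_on f (mcar A1.QM)" unfolding f_def by simp
  have surjg: "g ` mcar A2.QM = mcar A3.QM"
    unfolding car2 car3 using g_cl by (auto simp: image_iff)
  have kerg: "f ` mcar A1.QM = {x \<in> mcar A2.QM. g x = mzero A3.QM}"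
  proof (intro equalityI subsetI)
    fix x assume "x \<in> f ` mcar A1.QM"
    then obtain v where v: "v \<in> lift N0" "x = clP v" unfolding f_def car1 by blast
    have "clN v = clN 0" using v(1) A3.cl_eq unfolding clN_def by simp
    moreover have vq: "v \<in> lift Q0" using v lNQ by blast
    ultimately have "g x = mzero A3.QM" using v g_cl A3.q_zero unfolding clN_def by simp
    moreover have "x \<in> mcar A2.QM" using vq v car2 by blast
    ultimately show "x \<in> {x \<in> mcar A2.QM. g x = mzero A3.QM}" by blast
  next
    fix x assume "x \<in> {x \<in> mcar A2.QM. g x = mzero A3.QM}"
    then obtain v where v: "v \<in> lift Q0" "x = clP v" "g x = mzero A3.QM" unfolding car2 by blast
    then have "clN v = clN 0" using g_cl A3.q_zero unfolding clN_def by simp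
    then have "v \<in> lift N0" using A3.cl_eq unfolding clN_def by simp
    then show "x \<in> f ` mcar A1.QM" using v unfolding f_def car1 by blast
  qed
  have an1: "annihilated J A1.QM"
    by (rule A1.q_annihilated) (use ann NQ in \<open>auto simp: lift_def vact_def\<close>)
  have an2: "annihilated J A2.QM"
    by (rule A2.q_annihilated) (use ann in \<open>auto simp: lift_def vact_def\<close>)
  have an3: "annihilated J A3.QM"
    by (rule A3.q_annihilated) (use ann PN in \<open>auto simp: lift_def vact_def\<close>)
  note H0 = SS[unfolded dg_semisimple_quot_def]
  note H = H0[THEN spec[where x="A1.QM"], THEN spec[where x="A2.QM"], THEN spec[where x="A3.QM"],
    THEN spec[where x=f], THEN spec[where x=g]]
  have "\<exists>s. dg_hom gr A3.QM A2.QM s \<and> (\<forall>x\<in>mcar A3.QM. g (s x) = x)"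
    apply (rule mp[OF H])
    using A1.q_module A2.q_module A3.q_module an1 an2 an3 hf hg injf surjg kerg by (intro conjI)
  then obtain s where hs: "dg_hom gr A3.QM A2.QM s" and gs: "\<And>x. x \<in> mcar A3.QM \<Longrightarrow> g (s x) = x"
    by blast
  have s_car: "x \<in> mcar A3.QM \<Longrightarrow> s x \<in> mcar A2.QM" for x using hs unfolding dg_hom_def by blast
  have s_add: "x \<in> mcar A3.QM \<Longrightarrow> y \<in> mcar A3.QM \<Longrightarrow> s (madd A3.QM x y) = madd A2.QM (s x) (s y)" for x y
    using hs unfolding dg_hom_def by blast
  have s_sm: "x \<in> mcar A3.QM \<Longrightarrow> s (msmul A3.QM a x) = msmul A2.QM a (s x)" for a x
    using hs unfolding dg_hom_def by blast
  have s_gr: "x \<in> mgr A3.QM n \<Longrightarrow> s x \<in> mgr A2.QM n" for x n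
    using hs unfolding dg_hom_def by blast
  have s_dl: "x \<in> mcar A3.QM \<Longrightarrow> s (mdelta A3.QM x) = mdelta A2.QM (s x)" for x
    using hs unfolding dg_hom_def by blast
  have s_z: "s (mzero A3.QM) = mzero A2.QM"
  proof -
    have "s (mzero A3.QM) = madd A2.QM (s (mzero A3.QM)) (s (mzero A3.QM))"
      using s_add[of "mzero A3.QM" "mzero A3.QM"] by simp
    then show ?thesis using M2.z_unique[of "s (mzero A3.QM)" "s (mzero A3.QM)"] s_car by simp
  qed
  define C where "C = {x \<in> Q0. clP (x, 0) \<in> s ` mcar A3.QM}"
  have mem_lQ: "(x, 0) \<in> lift Q0 \<longleftrightarrow> x \<in> Q0" for x by (simp add: mem_lift)
  have PC: "P0 \<subseteq> C"
  proof
    fix x assume x: "x \<in> P0"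
    have "clP (x, 0) = clP 0" using x A2.cl_eq unfolding clP_def by (simp add: mem_lift)
    also have "\<dots> = s (mzero A3.QM)" using s_z A2.q_zero unfolding clP_def by simp
    finally show "x \<in> C" using x PN NQ unfolding C_def by auto
  qed
  have CQ: "C \<subseteq> Q0" unfolding C_def by blast
  have C_ok: "ideal_ok C"
    unfolding ideal_ok_def
  proof (intro conjI ballI allI)
    show "0 \<in> C" using PC iP unfolding ideal_ok_def by blast
    show "x + y \<in> C" if xy: "x \<in> C" "y \<in> C" for x y
    proof -
      obtain X Y where X: "X \<in> mcar A3.QM" "clP (x, 0) = s X" and Y: "Y \<in> mcar A3.QM" "clP (y, 0) = s Y"
        using xy unfolding C_def by blast
      have xy: "x \<in> Q0" "y \<in> Q0" using xy CQ by auto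
      have "clP (x + y, 0) = madd A2.QM (clP (x, 0)) (clP (y, 0))"
        using xy unfolding clP_def by (simp add: A2.q_add mem_lift)
      also have "\<dots> = s (madd A3.QM X Y)" using X Y s_add by simp
      finally show ?thesis unfolding C_def using xy X Y iQ M3.ad_car unfolding ideal_ok_def by blast
    qed
    show "a * x \<in> C" if xy: "x \<in> C" for a x
    proof -
      obtain X where X: "X \<in> mcar A3.QM" "clP (x, 0) = s X" using xy unfolding C_def by blast
      have xq: "x \<in> Q0" using xy CQ by auto
      have "clP (a * x, 0) = msmul A2.QM a (clP (x, 0))"
        using xq unfolding clP_def by (simp add: A2.q_sm mem_lift vact_def)
      also have "\<dots> = s (msmul A3.QM a X)" using X s_sm by simp
      finally show ?thesis unfolding C_def using xq X iQ M3.sm_car unfolding ideal_ok_def by blast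
    qed
    then show "- x \<in> C" if "x \<in> C" for x using that by (metis mult_minus1)
    show "d x \<in> C" if xy: "x \<in> C" for x
    proof -
      obtain X where X: "X \<in> mcar A3.QM" "clP (x, 0) = s X" using xy unfolding C_def by blast
      have xq: "x \<in> Q0" using xy CQ by auto
      have "clP (d x, 0) = mdelta A2.QM (clP (x, 0))"
        using xq unfolding clP_def by (simp add: A2.q_dl mem_lift vd_def)
      also have "\<dots> = s (mdelta A3.QM X)" using X s_dl by simp
      finally show ?thesis unfolding C_def using xq X iQ M3.dl_car unfolding ideal_ok_def by blast
    qed
    show "comp n x \<in> C" if xC: "x \<in> C" for x n
    proof -
      obtain X where X: "X \<in> mcar A3.QM" "clP (x, 0) = s X" using xC unfolding C_def by blast
      have xq: "x \<in> Q0" using xC CQ by auto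
      define v where "v = (x, 0::'a)"
      have vq: "v \<in> lift Q0" using xq unfolding v_def by (simp add: mem_lift)
      have Xv: "X = clN v" using gs[OF X(1)] X(2) g_cl[OF vq] unfolding v_def by simp
      define Y where "Y m = clN (vcomp m v)" for m
      have Ygr: "Y m \<in> mgr A3.QM m" for m
        unfolding Y_def A3.q_gr clN_def using A3.Qcomp[OF vq] vcomp_gr by blast
      have Ycar: "Y m \<in> mcar A3.QM" for m using Ygr M3.mg_car by blast
      define w where "w m = (SOME u. u \<in> lift Q0 \<inter> vgr m \<and> clP u = s (Y m))" for m
      have w: "w m \<in> lift Q0 \<inter> vgr m \<and> clP (w m) = s (Y m)" for m
      proof -
        have "s (Y m) \<in> clP ` (lift Q0 \<inter> vgr m)" using s_gr[OF Ygr] A2.q_gr unfolding clP_def by metis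
        then have "\<exists>u. u \<in> lift Q0 \<inter> vgr m \<and> clP u = s (Y m)" by (elim imageE) blast
        then show ?thesis unfolding w_def by (rule someI_ex)
      qed
      have sumL: "s (clN (\<Sum>m\<in>F. vcomp m v)) = clP (\<Sum>m\<in>F. w m)" if F: "finite F" for F
        using F
      proof (induction F rule: finite_induct)
        case empty
        then show ?case using s_z A2.q_zero A3.q_zero unfolding clP_def clN_def by simp
      next
        case (insert a F)
        have q1: "vcomp a v \<in> lift Q0" "(\<Sum>m\<in>F. vcomp m v) \<in> lift Q0"
          using A3.Qcomp[OF vq] A3.Qsum[of F "\<lambda>m. vcomp m v"] A3.Qcomp[OF vq] by auto
        have q2: "w a \<in> lift Q0" "(\<Sum>m\<in>F. w m) \<in> lift Q0"
          using w A2.Qsum[of F w] by auto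
        have "clN (\<Sum>m\<in>insert a F. vcomp m v) = madd A3.QM (Y a) (clN (\<Sum>m\<in>F. vcomp m v))"
          using insert q1 unfolding Y_def clN_def by (simp add: A3.q_add)
        then have "s (clN (\<Sum>m\<in>insert a F. vcomp m v)) = madd A2.QM (s (Y a)) (s (clN (\<Sum>m\<in>F. vcomp m v)))"
          using s_add[OF Ycar] q1 car3 by auto
        also have "\<dots> = madd A2.QM (clP (w a)) (clP (\<Sum>m\<in>F. w m))" using w insert by simp
        also have "\<dots> = clP (\<Sum>m\<in>insert a F. w m)"
          using q2 insert unfolding clP_def by (simp add: A2.q_add)
        finally show ?case .
      qed
      have "clP v = s (clN v)" using X(2) Xv unfolding v_def by simp
      also have "clN v = clN (\<Sum>m\<in>vsupp v. vcomp m v)"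
        using v_sum[OF finite_vsupp subset_refl, of v] by simp
      also have "s \<dots> = clP (\<Sum>m\<in>vsupp v. w m)" by (rule sumL[OF finite_vsupp])
      finally have "clP v = clP (\<Sum>m\<in>vsupp v. w m)" .
      then have "v - (\<Sum>m\<in>vsupp v. w m) \<in> lift P0" using A2.cl_eq unfolding clP_def by blast
      then have "vcomp n (v - (\<Sum>m\<in>vsupp v. w m)) \<in> lift P0" by (rule A2.Pcomp)
      then have D: "vcomp n v - (\<Sum>m\<in>vsupp v. vcomp n (w m)) \<in> lift P0"
        by (simp add: vcomp_diff vcomp_sum)
      have e: "(\<Sum>m\<in>vsupp v. vcomp n (w m)) = (if n \<in> vsupp v then w n else 0)"
      proof -
        have "(\<Sum>m\<in>vsupp v. vcomp n (w m)) = (\<Sum>m\<in>vsupp v. if n = m then w m else 0)"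
          by (rule sum.cong) (use w vcomp_homog in auto)
        then show ?thesis by (simp add: sum.delta)
      qed
      have vc: "vcomp n v = (comp n x, 0)" unfolding v_def vcomp_def by simp
      show ?thesis
      proof (cases "n \<in> vsupp v")
        case True
        then have "vcomp n v - w n \<in> lift P0" using D e by simp
        then have "clP (vcomp n v) = clP (w n)" using A2.cl_eq unfolding clP_def by blast
        then have "clP (comp n x, 0) = s (Y n)" using w vc by simp
        moreover have "comp n x \<in> Q0" using iQ xq unfolding ideal_ok_def by blast
        ultimately show ?thesis unfolding C_def using Ycar by blast
      next
        case False
        then have "comp n x = 0" using vcomp_out[OF False] vc by (metis fst_conv fst_zero)
        then show ?thesis using PC iP unfolding ideal_ok_def by auto
      qed
    qed
  qed
  have NC: "N0 \<inter> C = P0"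
  proof (intro equalityI subsetI)
    fix x assume x: "x \<in> N0 \<inter> C"
    then obtain X where X: "X \<in> mcar A3.QM" "clP (x, 0) = s X" unfolding C_def by blast
    have "(x, 0) \<in> lift Q0" "(x, 0) \<in> lift N0" using x NQ by (auto simp: mem_lift)
    then have "g (clP (x, 0)) = clN 0" using g_cl A3.cl_eq unfolding clN_def by simp
    then have "X = mzero A3.QM" using gs[OF X(1)] X(2) A3.q_zero unfolding clN_def by simp
    then have "clP (x, 0) = clP 0" using X(2) s_z A2.q_zero unfolding clP_def by simp
    then show "x \<in> P0" using A2.cl_eq unfolding clP_def by (simp add: mem_lift)
  qed (use PC PN in blast)
  have NCQ: "{y + c | y c. y \<in> N0 \<and> c \<in> C} = Q0"
  proof (intro equalityI subsetI)
    fix x assume "x \<in> {y + c | y c. y \<in> N0 \<and> c \<in> C}"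
    then show "x \<in> Q0" using NQ CQ iQ unfolding ideal_ok_def by blast
  next
    fix x assume x: "x \<in> Q0"
    define X where "X = clN (x, 0)"
    have X3: "X \<in> mcar A3.QM" using x car3 unfolding X_def by (auto simp: mem_lift)
    then obtain w where w: "w \<in> lift Q0" "s X = clP w" using s_car car2 by blast
    obtain c where c: "w = (c, 0)" "c \<in> Q0" using w(1) unfolding lift_def by auto
    have cC: "c \<in> C" unfolding C_def using c w X3 by auto
    have "clN (c, 0) = X" using gs[OF X3] w g_cl c by simp
    then have "(x, 0) - (c, 0) \<in> lift N0" using A3.cl_eq unfolding X_def clN_def by metis
    then have "x - c \<in> N0" by (simp add: mem_lift)
    moreover have "x = (x - c) + c" by simp
    ultimately show "x \<in> {y + c | y c. y \<in> N0 \<and> c \<in> C}" using cC by blast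
  qed
  show ?thesis using C_ok PC CQ NC NCQ by blast
qed

end

context gda begin

lemma ideal_add: "ideal_ok I \<Longrightarrow> x \<in> I \<Longrightarrow> y \<in> I \<Longrightarrow> x + y \<in> I" unfolding ideal_ok_def by blast
lemma ideal_neg: "ideal_ok I \<Longrightarrow> x \<in> I \<Longrightarrow> - x \<in> I" unfolding ideal_ok_def by blast
lemma ideal_zero: "ideal_ok I \<Longrightarrow> 0 \<in> I" unfolding ideal_ok_def by blast
lemma ideal_diff: "ideal_ok I \<Longrightarrow> x \<in> I \<Longrightarrow> y \<in> I \<Longrightarrow> x - y \<in> I"
  using ideal_add ideal_neg by (metis diff_conv_add_uminus)

definition ssum :: "'a set \<Rightarrow> 'a set \<Rightarrow> 'a set" where
  "ssum A B = {a + b | a b. a \<in> A \<and> b \<in> B}"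

lemma ideal_inter: "ideal_ok A \<Longrightarrow> ideal_ok B \<Longrightarrow> ideal_ok (A \<inter> B)"
  unfolding ideal_ok_def by blast

lemma ideal_sum: assumes A: "ideal_ok A" and B: "ideal_ok B" shows "ideal_ok (ssum A B)"
  unfolding ideal_ok_def ssum_def
proof (intro conjI ballI allI)
  show "0 \<in> {a + b |a b. a \<in> A \<and> b \<in> B}" using A B unfolding ideal_ok_def by force
  fix x y assume x: "x \<in> {a + b |a b. a \<in> A \<and> b \<in> B}"
  then obtain a b where ab: "a \<in> A" "b \<in> B" "x = a + b" by blast
  show "- x \<in> {a + b |a b. a \<in> A \<and> b \<in> B}"
  proof -
    have "- x = (- a) + (- b)" using ab by simp
    then show ?thesis using A B ab unfolding ideal_ok_def by blast
  qed
  show "c * x \<in> {a + b |a b. a \<in> A \<and> b \<in> B}" for c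
  proof -
    have "c * x = c * a + c * b" using ab by (simp add: distrib_left)
    then show ?thesis using A B ab unfolding ideal_ok_def by blast
  qed
  show "d x \<in> {a + b |a b. a \<in> A \<and> b \<in> B}"
  proof -
    have "d x = d a + d b" using ab by (simp add: d_add)
    then show ?thesis using A B ab unfolding ideal_ok_def by blast
  qed
  show "comp n x \<in> {a + b |a b. a \<in> A \<and> b \<in> B}" for n
  proof -
    have "comp n x = comp n a + comp n b" using ab by (simp add: comp_add)
    then show ?thesis using A B ab unfolding ideal_ok_def by blast
  qed
  assume "y \<in> {a + b |a b. a \<in> A \<and> b \<in> B}"
  then obtain a' b' where ab': "a' \<in> A" "b' \<in> B" "y = a' + b'" by blast
  have "x + y = (a + a') + (b + b')" using ab ab' by (simp add: algebra_simps)
  then show "x + y \<in> {a + b |a b. a \<in> A \<and> b \<in> B}" using A B ab ab' unfolding ideal_ok_def by blast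
qed

definition cpl :: "'a set \<Rightarrow> 'a set \<Rightarrow> 'a set \<Rightarrow> 'a set" where
  "cpl A B D = (SOME C. ideal_ok C \<and> A \<subseteq> C \<and> C \<subseteq> D \<and> B \<inter> C = A \<and> ssum B C = D)"

lemma cpl:
  assumes SS: "dg_semisimple_quot gr d J"
    and "ideal_ok A" "ideal_ok B" "ideal_ok D" "A \<subseteq> B" "B \<subseteq> D"
    and "\<And>j x. j \<in> J \<Longrightarrow> x \<in> D \<Longrightarrow> j * x \<in> A"
  shows "ideal_ok (cpl A B D) \<and> A \<subseteq> cpl A B D \<and> cpl A B D \<subseteq> D \<and> B \<inter> cpl A B D = A \<and> ssum B (cpl A B D) = D"
proof -
  have "\<exists>C. ideal_ok C \<and> A \<subseteq> C \<and> C \<subseteq> D \<and> B \<inter> C = A \<and> ssum B C = D"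
    using complement[OF assms] unfolding ssum_def by blast
  then show ?thesis unfolding cpl_def by (rule someI_ex)
qed

lemma interval_acc:
  assumes SS: "dg_semisimple_quot gr d J" and art: "dg_artinian gr d"
    and iP: "ideal_ok P0" and iQ: "ideal_ok Q0" and PQ: "P0 \<subseteq> Q0"
    and ann: "\<And>j x. j \<in> J \<Longrightarrow> x \<in> Q0 \<Longrightarrow> j * x \<in> P0"
    and N: "\<And>n. ideal_ok (N n) \<and> P0 \<subseteq> N n \<and> N n \<subseteq> Q0 \<and> N n \<subseteq> N (Suc n)"
  shows "\<exists>m. \<forall>n\<ge>m. N n = N m"
proof -
  define D where "D = rec_nat (cpl P0 (N 0) Q0) (\<lambda>n Dn. cpl P0 (N (Suc n) \<inter> Dn) Dn)"
  have D0: "D 0 = cpl P0 (N 0) Q0" unfolding D_def by simp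
  have DS: "D (Suc n) = cpl P0 (N (Suc n) \<inter> D n) (D n)" for n unfolding D_def by simp
  have inv: "ideal_ok (D n) \<and> P0 \<subseteq> D n \<and> D n \<subseteq> Q0 \<and> N n \<inter> D n = P0 \<and> ssum (N n) (D n) = Q0" for n
  proof (induction n)
    case 0
    show ?case unfolding D0 by (rule cpl[OF SS iP _ iQ]) (use N ann in auto)
  next
    case (Suc n)
    let ?B = "N (Suc n) \<inter> D n"
    have iB: "ideal_ok ?B" using ideal_inter N Suc by blast
    have c: "ideal_ok (D (Suc n)) \<and> P0 \<subseteq> D (Suc n) \<and> D (Suc n) \<subseteq> D n \<and> ?B \<inter> D (Suc n) = P0 \<and> ssum ?B (D (Suc n)) = D n"
      unfolding DS by (rule cpl[OF SS iP iB]) (use N Suc ann in \<open>auto\<close>)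
    have 1: "N (Suc n) \<inter> D (Suc n) = P0" using c by blast
    have 2: "ssum (N (Suc n)) (D (Suc n)) = Q0"
    proof (intro equalityI subsetI)
      fix x assume "x \<in> ssum (N (Suc n)) (D (Suc n))"
      then obtain a b where ab: "a \<in> N (Suc n)" "b \<in> D (Suc n)" "x = a + b" unfolding ssum_def by blast
      have "a \<in> Q0" using ab N by blast
      moreover have "b \<in> Q0" using ab c Suc by blast
      ultimately show "x \<in> Q0" using ab iQ unfolding ideal_ok_def by blast
    next
      fix x assume "x \<in> Q0"
      then have "x \<in> ssum (N n) (D n)" using Suc by simp
      then obtain a e where ae: "a \<in> N n" "e \<in> D n" "x = a + e" unfolding ssum_def by blast
      have c5: "ssum ?B (D (Suc n)) = D n" using c by blast
      have "e \<in> ssum ?B (D (Suc n))" using ae(2) c5 by simp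
      then obtain b c' where bc: "b \<in> ?B" "c' \<in> D (Suc n)" "e = b + c'" unfolding ssum_def
        by (elim CollectE exE conjE) (rule that; assumption)
      have "a \<in> N (Suc n)" using ae N by blast
      moreover have "b \<in> N (Suc n)" using bc by blast
      ultimately have "a + b \<in> N (Suc n)" using N ideal_add by blast
      moreover have "x = (a + b) + c'" using ae bc by (simp add: add.assoc)
      ultimately show "x \<in> ssum (N (Suc n)) (D (Suc n))" using bc unfolding ssum_def by blast
    qed
    show ?case using c 1 2 Suc by blast
  qed
  have Ddesc: "D (Suc n) \<subseteq> D n" for n
  proof -
    have iB: "ideal_ok (N (Suc n) \<inter> D n)" using ideal_inter N inv by blast
    have "ideal_ok (cpl P0 (N (Suc n) \<inter> D n) (D n)) \<and> P0 \<subseteq> cpl P0 (N (Suc n) \<inter> D n) (D n) \<and>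
      cpl P0 (N (Suc n) \<inter> D n) (D n) \<subseteq> D n \<and> (N (Suc n) \<inter> D n) \<inter> cpl P0 (N (Suc n) \<inter> D n) (D n) = P0 \<and>
      ssum (N (Suc n) \<inter> D n) (cpl P0 (N (Suc n) \<inter> D n) (D n)) = D n"
    proof (rule cpl[OF SS iP iB])
      show "ideal_ok (D n)" using inv by blast
      show "P0 \<subseteq> N (Suc n) \<inter> D n" using N inv by blast
      show "N (Suc n) \<inter> D n \<subseteq> D n" by blast
      have DQ: "D n \<subseteq> Q0" using inv by blast
      show "j * x \<in> P0" if "j \<in> J" "x \<in> D n" for j x using ann that DQ by blast
    qed
    then show ?thesis unfolding DS by blast
  qed
  obtain m where m: "\<forall>n\<ge>m. D n = D m"
    using art unfolding dg_artinian_def left_dg_ideal_iff using inv Ddesc by blast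
  have stepN: "N (Suc n) = N n" if n: "n \<ge> m" for n
  proof
    show "N n \<subseteq> N (Suc n)" using N by blast
    show "N (Suc n) \<subseteq> N n"
    proof
      fix x assume x: "x \<in> N (Suc n)"
      then have "x \<in> Q0" using N by blast
      then have "x \<in> ssum (N n) (D n)" using inv[of n] by simp
      then obtain a e where ae: "a \<in> N n" "e \<in> D n" "x = a + e" unfolding ssum_def by blast
      have "e = x - a" using ae by (simp add: algebra_simps)
      moreover have "a \<in> N (Suc n)" using ae N by blast
      ultimately have "e \<in> N (Suc n)" using x N ideal_diff by metis
      moreover have "D (Suc n) = D n" using m n by (metis le_SucI)
      ultimately have "e \<in> P0" using inv[of "Suc n"] ae by blast
      then have "e \<in> N n" using N by blast
      then show "x \<in> N n" using ae N ideal_add by blast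
    qed
  qed
  have "N n = N m" if "n \<ge> m" for n
    using that
  proof (induction n rule: dec_induct)
    case (step k) then show ?case using stepN[of k] by simp
  qed simp
  then show ?thesis by blast
qed

lemma chain_mono: "(\<And>n. I n \<subseteq> I (Suc n)) \<Longrightarrow> m \<le> n \<Longrightarrow> I m \<subseteq> I n"
  by (rule lift_Suc_mono_le)

lemma noetherian:
  assumes SS: "dg_semisimple_quot gr d J" and art: "dg_artinian gr d" and nil: "nilpotent_set J"
  shows "dg_noetherian gr d"
  unfolding dg_noetherian_def left_dg_ideal_iff
proof (intro allI impI)
  fix I :: "nat \<Rightarrow> 'a set" assume I: "\<forall>n. ideal_ok (I n) \<and> I n \<subseteq> I (Suc n)"
  have Imono: "m \<le> n \<Longrightarrow> I m \<subseteq> I n" for m n using chain_mono[of I] I by blast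
  have "\<exists>m. \<forall>n\<ge>m. I n \<inter> L i = I m \<inter> L i" for i
  proof (induction i)
    case 0
    have "I n \<inter> L 0 = {0}" for n using I L0 unfolding ideal_ok_def by auto
    then show ?case by auto
  next
    case (Suc i)
    then obtain m0 where m0: "\<forall>n\<ge>m0. I n \<inter> L i = I m0 \<inter> L i" by blast
    define N where "N n = ssum (I n \<inter> L (Suc i)) (L i)" for n
    have LL: "L i \<subseteq> L (Suc i)" by (rule L_mono)
    have N: "ideal_ok (N n) \<and> L i \<subseteq> N n \<and> N n \<subseteq> L (Suc i) \<and> N n \<subseteq> N (Suc n)" for n
    proof (intro conjI)
      show "ideal_ok (N n)" unfolding N_def using ideal_sum ideal_inter I L_ideal by blast
      show "L i \<subseteq> N n"
      proof
        fix x assume "x \<in> L i"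
        moreover have "0 \<in> I n \<inter> L (Suc i)" using I L_ideal unfolding ideal_ok_def by blast
        ultimately show "x \<in> N n" unfolding N_def ssum_def
          by (intro CollectI exI[of _ 0] exI[of _ x]) simp
      qed
      show "N n \<subseteq> L (Suc i)" unfolding N_def ssum_def using LL L_ideal[of "Suc i"]
        unfolding ideal_ok_def by blast
      show "N n \<subseteq> N (Suc n)" unfolding N_def ssum_def using I by blast
    qed
    obtain m1 where m1: "\<forall>n\<ge>m1. N n = N m1"
      by (rule exE[OF interval_acc[where N=N, OF SS art L_ideal[of i] L_ideal[of "Suc i"] LL L_J[of _ _ i] N]]) blast
    define m where "m = max m0 m1"
    have "I n \<inter> L (Suc i) = I m \<inter> L (Suc i)" if n: "n \<ge> m" for n
    proof
      show "I m \<inter> L (Suc i) \<subseteq> I n \<inter> L (Suc i)" using Imono n by blast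
      show "I n \<inter> L (Suc i) \<subseteq> I m \<inter> L (Suc i)"
      proof
        fix y assume y: "y \<in> I n \<inter> L (Suc i)"
        have "0 \<in> L i" using L_ideal unfolding ideal_ok_def by blast
        then have "y \<in> N n" unfolding N_def ssum_def
          by (intro CollectI exI[of _ y] exI[of _ 0]) (use y in simp)
        moreover have "N n = N m"
        proof -
          have "n \<ge> m1" "m \<ge> m1" using n unfolding m_def by auto
          then have "N n = N m1" "N m = N m1" using m1 by blast+
          then show ?thesis by simp
        qed
        ultimately obtain x l where xl: "x \<in> I m \<inter> L (Suc i)" "l \<in> L i" "y = x + l"
          unfolding N_def ssum_def by blast
        have "l = y - x" using xl by (simp add: algebra_simps)
        moreover have "x \<in> I n" using xl Imono[of m n] n by blast
        moreover have "ideal_ok (I n)" using I by blast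
        ultimately have "l \<in> I n" using y ideal_diff[of "I n" y x] by simp
        then have "l \<in> I n \<inter> L i" using xl by blast
        also have "\<dots> = I m \<inter> L i"
        proof -
          have "n \<ge> m0" "m \<ge> m0" using n unfolding m_def by auto
          then have "I n \<inter> L i = I m0 \<inter> L i" "I m \<inter> L i = I m0 \<inter> L i" using m0 by blast+
          then show ?thesis by simp
        qed
        finally have "l \<in> I m" by blast
        then show "y \<in> I m \<inter> L (Suc i)" using xl y I ideal_add by blast
      qed
    qed
    then show ?case by blast
  qed
  moreover obtain k where "L k = UNIV" using L_top[OF nil] by blast
  ultimately show "\<exists>N. \<forall>n\<ge>N. I n = I N" by (metis Int_UNIV_right)
qed

end

context gda begin

lemma geom: "(1 - j) * (\<Sum>i<k. j ^ i) = 1 - j ^ (k::nat)" for j :: 'a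
proof (induction k)
  case (Suc k)
  have "(1 - j) * (\<Sum>i<Suc k. j ^ i) = (1 - j) * (\<Sum>i<k. j ^ i) + (1 - j) * j ^ k"
    unfolding sum.lessThan_Suc by (rule distrib_left)
  also have "\<dots> = (1 - j ^ k) + (1 - j) * j ^ k" using Suc by simp
  also have "\<dots> = 1 - j ^ Suc k" by (simp add: algebra_simps power_Suc)
  finally show ?case .
qed simp

lemma acyc_from_h: assumes h: "h \<in> gr (-1)" "d h = 1" shows "acyclic_dg d"
  unfolding acyclic_dg_def
proof (intro equalityI subsetI)
  fix z assume "z \<in> {a. d a = 0}"
  then have z: "d z = 0" by simp
  have "d (h * z) = z" using leib[OF h(1), of z] h(2) z by simp
  then show "z \<in> range d" by (metis rangeI)
qed auto

lemma acyclic: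
  assumes SS: "dg_semisimple_quot gr d J" and nil: "nilpotent_set J"
  shows "acyclic_dg d"
proof -
  define P0 where "P0 = J \<times> {0::'a}"
  define Q0 where "Q0 = (UNIV :: 'a set) \<times> {0::'a}"
  define Pc where "Pc = J \<times> J"
  define Qc where "Qc = (UNIV :: ('a \<times> 'a) set)"
  define P1 where "P1 = {0::'a} \<times> J"
  define Q1 where "Q1 = {0::'a} \<times> (UNIV :: 'a set)"
  have J0: "0 \<in> J" by (rule J_zero)
  have v0: "vok P0 True" unfolding vok_def P0_def vact_def vd_def vcomp_def
    by (auto simp: mem_Times_iff J_zero J_add J_neg J_right J_left J_d J_comp)
  have vq0: "vok Q0 True" unfolding vok_def Q0_def vact_def vd_def vcomp_def
    by (auto simp: mem_Times_iff)
  have vc: "vok Pc True" unfolding vok_def Pc_def vact_def vd_def vcomp_def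
    by (auto simp: mem_Times_iff J_zero J_add J_neg J_left J_d J_comp J_alpha)
  have vqc: "vok Qc True" unfolding vok_def Qc_def by auto
  have v1: "vok P1 False" unfolding vok_def P1_def vact_def vd_def vcomp_def
    by (auto simp: mem_Times_iff J_zero J_add J_neg J_left J_d J_comp)
  have vq1: "vok Q1 False" unfolding vok_def Q1_def vact_def vd_def vcomp_def
    by (auto simp: mem_Times_iff)
  interpret A1: qm sc gr d P0 Q0 True by unfold_locales (fact v0, fact vq0, auto simp: P0_def Q0_def)
  interpret Ac: qm sc gr d Pc Qc True by unfold_locales (fact vc, fact vqc, auto simp: Qc_def)
  interpret A3: qm sc gr d P1 Q1 False by unfold_locales (fact v1, fact vq1, auto simp: P1_def Q1_def)
  interpret Mc: dgm sc gr d Ac.QM by unfold_locales (rule Ac.q_module)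
  interpret M3: dgm sc gr d A3.QM by unfold_locales (rule A3.q_module)
  define cl0 where "cl0 = cls P0"
  define clc where "clc = cls Pc"
  define cl1 where "cl1 = cls P1"
  define \<pi> where "\<pi> v = (0::'a, snd v)" for v :: "'a \<times> 'a"
  define f where "f X = clc (rep P0 Q0 X)" for X
  define g where "g X = cl1 (\<pi> (rep Pc Qc X))" for X
  have f_cl: "f (cl0 v) = clc v" if "v \<in> Q0" for v
  proof -
    have "rep P0 Q0 (cl0 v) - v \<in> Pc" using A1.rp_diff[OF that] J0 unfolding cl0_def P0_def Pc_def by auto
    then show ?thesis unfolding f_def clc_def using Ac.cl_eq by blast
  qed
  have g_cl: "g (clc v) = cl1 (\<pi> v)" for v
  proof -
    have "rep Pc Qc (clc v) - v \<in> Pc" using Ac.rp_diff[of v] unfolding clc_def Qc_def by auto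
    then have "\<pi> (rep Pc Qc (clc v)) - \<pi> v \<in> P1" unfolding \<pi>_def Pc_def P1_def by (auto simp: mem_Times_iff)
    then show ?thesis unfolding g_def cl1_def using A3.cl_eq by blast
  qed
  have car1: "mcar A1.QM = cl0 ` Q0" unfolding cl0_def by (rule A1.q_car)
  have carc: "mcar Ac.QM = clc ` Qc" unfolding clc_def by (rule Ac.q_car)
  have car3: "mcar A3.QM = cl1 ` Q1" unfolding cl1_def by (rule A3.q_car)
  have Q0c: "v \<in> Qc" for v unfolding Qc_def by simp
  have hf: "dg_hom gr A1.QM Ac.QM f"
    unfolding dg_hom_def car1 carc
  proof (intro conjI ballI allI)
    show "f x \<in> clc ` Qc" if "x \<in> cl0 ` Q0" for x using that f_cl Q0c by auto
    show "f (madd A1.QM x y) = madd Ac.QM (f x) (f y)" if xy: "x \<in> cl0 ` Q0" "y \<in> cl0 ` Q0" for x y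
    proof -
      obtain v w where vw: "v \<in> Q0" "w \<in> Q0" "x = cl0 v" "y = cl0 w" using xy by blast
      have "v + w \<in> Q0" using vw A1.Qadd by blast
      then show ?thesis using vw f_cl Q0c unfolding cl0_def clc_def by (simp add: A1.q_add Ac.q_add)
    qed
    show "f (msmul A1.QM a x) = msmul Ac.QM a (f x)" if xy: "x \<in> cl0 ` Q0" for a x
    proof -
      obtain v where vw: "v \<in> Q0" "x = cl0 v" using xy by blast
      have "vact a v \<in> Q0" using vw A1.Qact by blast
      then show ?thesis using vw f_cl Q0c unfolding cl0_def clc_def by (simp add: A1.q_sm Ac.q_sm)
    qed
    show "f x \<in> mgr Ac.QM n" if xy: "x \<in> mgr A1.QM n" for x n
    proof -
      obtain v where vw: "v \<in> Q0 \<inter> vgr n" "x = cl0 v" using xy unfolding A1.q_gr cl0_def by blast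
      then show ?thesis using f_cl Q0c unfolding Ac.q_gr clc_def by auto
    qed
    show "f (mdelta A1.QM x) = mdelta Ac.QM (f x)" if xy: "x \<in> cl0 ` Q0" for x
    proof -
      obtain v where vw: "v \<in> Q0" "x = cl0 v" using xy by blast
      have "vd True v \<in> Q0" using vw A1.Qd by blast
      then show ?thesis using vw f_cl Q0c unfolding cl0_def clc_def by (simp add: A1.q_dl Ac.q_dl)
    qed
  qed
  have \<pi>_Q1: "\<pi> v \<in> Q1" for v unfolding \<pi>_def Q1_def by simp
  have hg: "dg_hom gr Ac.QM A3.QM g"
    unfolding dg_hom_def carc car3
  proof (intro conjI ballI allI)
    show "g x \<in> cl1 ` Q1" if "x \<in> clc ` Qc" for x using that g_cl \<pi>_Q1 by auto
    show "g (madd Ac.QM x y) = madd A3.QM (g x) (g y)" if xy: "x \<in> clc ` Qc" "y \<in> clc ` Qc" for x y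
    proof -
      obtain v w where vw: "x = clc v" "y = clc w" using xy by blast
      have "\<pi> (v + w) = \<pi> v + \<pi> w" unfolding \<pi>_def by simp
      then show ?thesis using vw g_cl \<pi>_Q1 Q0c unfolding clc_def cl1_def by (simp add: Ac.q_add A3.q_add)
    qed
    show "g (msmul Ac.QM a x) = msmul A3.QM a (g x)" if xy: "x \<in> clc ` Qc" for a x
    proof -
      obtain v where vw: "x = clc v" using xy by blast
      have "\<pi> (vact a v) = vact a (\<pi> v)" unfolding \<pi>_def vact_def by simp
      then show ?thesis using vw g_cl \<pi>_Q1 Q0c unfolding clc_def cl1_def by (simp add: Ac.q_sm A3.q_sm)
    qed
    show "g x \<in> mgr A3.QM n" if xy: "x \<in> mgr Ac.QM n" for x n
    proof -
      obtain v where vw: "v \<in> vgr n" "x = clc v" using xy unfolding Ac.q_gr clc_def by blast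
      have "\<pi> v \<in> Q1 \<inter> vgr n" using vw \<pi>_Q1 unfolding \<pi>_def vgr_def by auto
      then show ?thesis using vw g_cl unfolding A3.q_gr cl1_def by auto
    qed
    show "g (mdelta Ac.QM x) = mdelta A3.QM (g x)" if xy: "x \<in> clc ` Qc" for x
    proof -
      obtain v where vw: "x = clc v" using xy by blast
      have "\<pi> (vd True v) = vd False (\<pi> v)" unfolding \<pi>_def vd_def by simp
      then show ?thesis using vw g_cl \<pi>_Q1 Q0c unfolding clc_def cl1_def by (simp add: Ac.q_dl A3.q_dl)
    qed
  qed
  have injf: "inj_on f (mcar A1.QM)"
  proof (rule inj_onI)
    fix x y assume "x \<in> mcar A1.QM" "y \<in> mcar A1.QM" and e: "f x = f y"
    then obtain v w where vw: "v \<in> Q0" "w \<in> Q0" "x = cl0 v" "y = cl0 w" unfolding car1 by blast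
    then have "clc v = clc w" using e f_cl by simp
    then have "v - w \<in> Pc" using Ac.cl_eq unfolding clc_def by blast
    then have "v - w \<in> P0" using vw unfolding Pc_def P0_def Q0_def by (auto simp: mem_Times_iff)
    then show "x = y" using vw A1.cl_eq unfolding cl0_def by blast
  qed
  have surjg: "g ` mcar Ac.QM = mcar A3.QM"
  proof (intro equalityI subsetI)
    fix x assume "x \<in> g ` mcar Ac.QM" then show "x \<in> mcar A3.QM" using hg unfolding dg_hom_def by blast
  next
    fix x assume "x \<in> mcar A3.QM"
    then obtain v where v: "v \<in> Q1" "x = cl1 v" unfolding car3 by blast
    then have "\<pi> v = v" unfolding Q1_def \<pi>_def by auto
    then have "g (clc v) = x" using g_cl v by simp
    then show "x \<in> g ` mcar Ac.QM" unfolding carc using Q0c by blast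
  qed
  have kerg: "f ` mcar A1.QM = {x \<in> mcar Ac.QM. g x = mzero A3.QM}"
  proof (intro equalityI subsetI)
    fix x assume "x \<in> f ` mcar A1.QM"
    then obtain v where v: "v \<in> Q0" "x = clc v" unfolding car1 using f_cl by auto
    have "\<pi> v = 0" using v(1) unfolding \<pi>_def Q0_def by auto
    then have "g x = mzero A3.QM" using v g_cl A3.q_zero unfolding cl1_def by simp
    then show "x \<in> {x \<in> mcar Ac.QM. g x = mzero A3.QM}" using v carc Q0c by auto
  next
    fix x assume x: "x \<in> {x \<in> mcar Ac.QM. g x = mzero A3.QM}"
    then obtain v where v: "x = clc v" unfolding carc by blast
    then have "cl1 (\<pi> v) = cl1 0" using x g_cl A3.q_zero unfolding cl1_def by simp
    then have "\<pi> v \<in> P1" using A3.cl_eq unfolding cl1_def by simp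
    then have sJ: "snd v \<in> J" unfolding \<pi>_def P1_def by auto
    have "v - (fst v, 0) \<in> Pc" using sJ J0 unfolding Pc_def by (cases v) auto
    then have "clc v = clc (fst v, 0)" using Ac.cl_eq unfolding clc_def by blast
    also have "\<dots> = f (cl0 (fst v, 0))" using f_cl unfolding Q0_def by simp
    finally show "x \<in> f ` mcar A1.QM" using v car1 unfolding Q0_def by auto
  qed
  have an1: "annihilated J A1.QM"
    by (rule A1.q_annihilated) (auto simp: P0_def Q0_def vact_def J_right)
  have an2: "annihilated J Ac.QM"
    by (rule Ac.q_annihilated) (auto simp: Pc_def vact_def J_right)
  have an3: "annihilated J A3.QM"
    by (rule A3.q_annihilated) (auto simp: P1_def Q1_def vact_def J_right)
  note H0 = SS[unfolded dg_semisimple_quot_def]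
  note H = H0[THEN spec[where x="A1.QM"], THEN spec[where x="Ac.QM"], THEN spec[where x="A3.QM"],
    THEN spec[where x=f], THEN spec[where x=g]]
  have "\<exists>s. dg_hom gr A3.QM Ac.QM s \<and> (\<forall>x\<in>mcar A3.QM. g (s x) = x)"
    apply (rule mp[OF H])
    using A1.q_module Ac.q_module A3.q_module an1 an2 an3 hf hg injf surjg kerg by (intro conjI)
  then obtain s where hs: "dg_hom gr A3.QM Ac.QM s" and gs: "\<And>x. x \<in> mcar A3.QM \<Longrightarrow> g (s x) = x"
    by blast
  have s_car: "x \<in> mcar A3.QM \<Longrightarrow> s x \<in> mcar Ac.QM" for x using hs unfolding dg_hom_def by blast
  have s_add: "x \<in> mcar A3.QM \<Longrightarrow> y \<in> mcar A3.QM \<Longrightarrow> s (madd A3.QM x y) = madd Ac.QM (s x) (s y)" for x y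
    using hs unfolding dg_hom_def by blast
  have s_gr: "x \<in> mgr A3.QM n \<Longrightarrow> s x \<in> mgr Ac.QM n" for x n
    using hs unfolding dg_hom_def by blast
  have s_dl: "x \<in> mcar A3.QM \<Longrightarrow> s (mdelta A3.QM x) = mdelta Ac.QM (s x)" for x
    using hs unfolding dg_hom_def by blast
  have s_z: "s (mzero A3.QM) = mzero Ac.QM"
  proof -
    have "s (mzero A3.QM) = madd Ac.QM (s (mzero A3.QM)) (s (mzero A3.QM))"
      using s_add[of "mzero A3.QM" "mzero A3.QM"] by simp
    then show ?thesis using Mc.z_unique[of "s (mzero A3.QM)" "s (mzero A3.QM)"] s_car by simp
  qed
  define Y where "Y = cl1 (0, 1)"
  have Ygr: "Y \<in> mgr A3.QM (-1)"
  proof -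
    have "(0::'a, 1::'a) \<in> Q1 \<inter> vgr (-1)" unfolding Q1_def vgr_def using gr_one by simp
    then show ?thesis unfolding Y_def A3.q_gr cl1_def by blast
  qed
  have Ycar: "Y \<in> mcar A3.QM" using Ygr M3.mg_car by blast
  have dY: "mdelta A3.QM Y = mzero A3.QM"
  proof -
    have "(0::'a, 1::'a) \<in> Q1" unfolding Q1_def by simp
    then have "mdelta A3.QM Y = cl1 (vd False (0, 1))" unfolding Y_def cl1_def by (simp add: A3.q_dl)
    also have "vd False (0, 1) = (0 :: 'a \<times> 'a)" unfolding vd_def by simp
    finally show ?thesis using A3.q_zero unfolding cl1_def by simp
  qed
  obtain u v where uv: "(u, v) \<in> vgr (-1)" "s Y = clc (u, v)"
    using s_gr[OF Ygr] unfolding Ac.q_gr clc_def by auto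
  have u: "u \<in> gr (-1)" and v: "v \<in> gr 0" using uv(1) unfolding vgr_def by auto
  have "cl1 (0, v) = cl1 (0, 1)" using gs[OF Ycar] uv(2) g_cl unfolding Y_def \<pi>_def by simp
  then have "(0, v - 1) \<in> P1" using A3.cl_eq unfolding cl1_def by simp
  then have v1: "v - 1 \<in> J" unfolding P1_def by simp
  have "clc (vd True (u, v)) = mdelta Ac.QM (s Y)" using uv(2) Q0c unfolding clc_def by (simp add: Ac.q_dl)
  also have "\<dots> = s (mdelta A3.QM Y)" using s_dl[OF Ycar] by simp
  also have "\<dots> = clc 0" using dY s_z Ac.q_zero unfolding clc_def by simp
  finally have "vd True (u, v) \<in> Pc" using Ac.cl_eq unfolding clc_def by simp
  then have "d u + alpha v \<in> J" unfolding vd_def Pc_def by simp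
  then have duv: "d u + v \<in> J" using alpha_homog[OF v] by (simp add: sgnd_simps)
  define h0 where "h0 = - u"
  have h0: "h0 \<in> gr (-1)" unfolding h0_def using gr_neg[OF u] .
  define j0 where "j0 = 1 - d h0"
  have j0J: "j0 \<in> J"
  proof -
    have "j0 = (d u + v) - (v - 1)" unfolding j0_def h0_def by (simp add: d_neg algebra_simps)
    then show ?thesis using J_diff[OF duv v1] by simp
  qed
  have dh0: "d h0 \<in> gr 0" using d_gr[OF h0] by simp
  have j0g: "j0 \<in> gr 0" unfolding j0_def using gr_diff[OF gr_one dh0] .
  have dj0: "d j0 = 0" unfolding j0_def by (simp add: d_diff)
  obtain k where k: "\<forall>xs. length xs = k \<and> set xs \<subseteq> J \<longrightarrow> prod_list xs = 0"
    using nil unfolding nilpotent_set_def by blast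
  have j0k: "j0 ^ k = 0"
  proof -
    have "length (replicate k j0) = k \<and> set (replicate k j0) \<subseteq> J" using j0J by auto
    then have "prod_list (replicate k j0) = 0" using k by blast
    then show ?thesis by (simp add: prod_list_replicate)
  qed
  have powg: "j0 ^ i \<in> gr 0" for i
    by (induction i) (use gr_one gr_mult[OF j0g] in auto)
  have powd: "d (j0 ^ i) = 0" for i
  proof (induction i)
    case (Suc i) then show ?case using leib[OF j0g, of "j0 ^ i"] dj0 by simp
  qed simp
  define w where "w = (\<Sum>i<k. j0 ^ i)"
  have wg: "w \<in> gr 0" unfolding w_def by (rule gr_sum) (use powg in blast)
  have dw: "d w = 0" unfolding w_def by (simp add: d_sum powd)
  have jw: "(1 - j0) * w = 1" unfolding w_def using geom[of j0 k] j0k by simp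
  define h where "h = h0 * w"
  have hg': "h \<in> gr (-1)" unfolding h_def using gr_mult[OF h0 wg] by simp
  have "d h = 1"
    unfolding h_def using leib[OF h0, of w] dw jw unfolding j0_def by simp
  then show ?thesis using acyc_from_h[OF hg'] by blast
qed

end

theorem theorem4p1:
  fixes sc :: "'r::comm_ring_1 \<Rightarrow> 'a::ring_1"
    and gr :: "int \<Rightarrow> 'a set"
    and d :: "'a \<Rightarrow> 'a"
  assumes "graded_dg_algebra sc gr d"
    and "dg_semiprimary gr d"
    and "dg_artinian gr d"
    and "nilpotent_set (dgrad gr d)"
  shows "dg_noetherian gr d \<and> acyclic_dg d"
proof -
  interpret gda sc gr d by (rule gda.intro) (rule assms(1))
  have SS: "dg_semisimple_quot gr d (dgrad gr d)" using assms(2) unfolding dg_semiprimary_def by blast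
  show ?thesis using noetherian[OF SS assms(3) assms(4)] acyclic[OF SS assms(4)] by blast
qed

end
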